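(* Under the standing setup in the context, let $\gamma_k=\gamma_0(1+\delta k)^{-3/4}$ and $\eta_k=\eta_0(1+\delta k)^{-1}$ with $\gamma_0,\eta_0>0$ and $0<\delta\le\frac45\mu\eta_0$, and let $\bar\kappa\ge0$ be an integer such that for all $k\ge\bar\kappa$: $\eta_k(\mu+L)+\gamma_k\rho_N\le2$ and $\frac{\eta_k}{\gamma_k}\le\frac{\zeta\mu\rho_2}{\sqrt N\nabla^*L}$. Writing $\mathbf W_k=[\mathbf w_{1k}^\top,\dots,\mathbf w_{Nk}^\top]^\top$, there is a constant $C<\infty$ (independent of $k$) such that for all $k\ge\bar\kappa$, $$\mathbb E\Big[\frac1N\sum_{i=1}^N\|\mathbf w_{ik}-\mathbf w^*\|^2\Big]\le \frac{C}{\sqrt{k+1}}.$$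
   Context: Standing setup. Let $N\ge2$, $d\ge1$. For $i=1,\dots,N$, $f_i:\mathbb R^d\to\mathbb R$ is $\mu$-strongly convex and $L$-smooth (gradient $L$-Lipschitz), $0<\mu\le L$. Let $F(\mathbf w)=\frac1N\sum_i f_i(\mathbf w)$ with unique minimizer $\mathbf w^*\in\mathbb R^d$. Let $\mathcal W\subset\mathbb R^d$ be nonempty, closed, convex, bounded with $\mathbf w^*\in\mathrm{int}(\mathcal W)$; $\zeta\triangleq\min_{\mathbf w\in\mathrm{bd}(\mathcal W)}\|\mathbf w-\mathbf w^*\|>0$; $\nabla^*\triangleq\max_i\|\nabla f_i(\mathbf w^* )\|$. Let $\mathbf L\in\mathbb R^{N\times N}$ be a Laplacian matrix: symmetric, off-diagonal entries $\le0$, $\mathbf L\mathbf 1_N=\mathbf 0$; its eigenvalues are $0=\rho_1\le\rho_2\le\dots\le\rho_N$, and $\rho_2>0$. Set $\hat{\mathbf L}=\mathbf L\otimes\mathbf I_d$. For $\mathbf W=[\mathbf w_1^\top,\dots,\mathbf w_N^\top]^\top\in\mathbb R^{Nd}$ let $f(\mathbf W)=\sum_i f_i(\mathbf w_i)$. $\Pi^N$ denotes Euclidean projection onto $\mathcal W^N$. Given stepsizes $\eta_k,\gamma_k>0$, define $G_k(\mathbf W)=f(\mathbf W)+\frac{\gamma_k}{2\eta_k}\mathbf W^\top\hat{\mathbf L}\mathbf W$. On a probability space with filtration $(\mathcal F_k)$, fix an $\mathcal F_{\bar\kappa}$-measurable $\mathbf W_{\bar\kappa}\in\mathcal W^N$,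 and define for $k\ge\bar\kappa$ $$\mathbf W_{k+1}=\Pi^N\big[\mathbf W_k-\eta_k\nabla G_k(\mathbf W_k)+\gamma_k\boldsymbol\epsilon_k^{(1)}-\eta_k\boldsymbol\epsilon_k^{(2)}\big],$$ where $\boldsymbol\epsilon_k^{(1)},\boldsymbol\epsilon_k^{(2)}\in\mathbb R^{Nd}$ are $\mathcal F_{k+1}$-measurable with $\mathbb E[\boldsymbol\epsilon_k^{(1)}|\mathcal F_k]=\mathbb E[\boldsymbol\epsilon_k^{(2)}|\mathcal F_k]=\mathbf 0$, $\mathbb E[\langle\boldsymbol\epsilon_k^{(1)},\boldsymbol\epsilon_k^{(2)}\rangle|\mathcal F_k]=0$, and $\frac1N\mathbb E[\|\boldsymbol\epsilon_k^{(1)}\|^2|\mathcal F_k]\le\Sigma^{(1)}$, $\frac1N\mathbb E[\|\boldsymbol\epsilon_k^{(2)}\|^2|\mathcal F_k]\le\Sigma^{(2)}$ for constants $\Sigma^{(1)},\Sigma^{(2)}\ge0$. *)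

theory Defs
  imports "HOL-Analysis.Analysis" "HOL-Probability.Probability"
begin

definition strongly_convex :: "real \<Rightarrow> ('a::real_inner \<Rightarrow> real) \<Rightarrow> bool" where
  "strongly_convex \<mu> g \<longleftrightarrow> (\<forall>x y t. 0 \<le> t \<and> t \<le> 1 \<longrightarrow>
      g (t *\<^sub>R x + (1 - t) *\<^sub>R y) \<le> t * g x + (1 - t) * g y - \<mu> / 2 * t * (1 - t) * (norm (x - y))\<^sup>2)"

definition smooth_with_grad :: "real \<Rightarrow> ('a::real_inner \<Rightarrow> real) \<Rightarrow> ('a \<Rightarrow> 'a) \<Rightarrow> bool" where
  "smooth_with_grad L g dg \<longleftrightarrow> (\<forall>x. GDERIV g x :> dg x) \<and> L-lipschitz_on UNIV dg"

definition laplacian_matrix :: "real^'n^'n \<Rightarrow> bool" where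
  "laplacian_matrix Lm \<longleftrightarrow> transpose Lm = Lm \<and> (\<forall>i j. i \<noteq> j \<longrightarrow> Lm $ i $ j \<le> 0)
     \<and> Lm *v (1 :: real^'n) = 0"

(* rho 1 <= ... <= rho N are the eigenvalues of the symmetric matrix Lm, listed with multiplicity
   (N = CARD('n)): there is an orthonormal basis v 1, ..., v N with Lm v j = rho j v j. *)
definition ordered_eigenvalues :: "real^'n^'n \<Rightarrow> (nat \<Rightarrow> real) \<Rightarrow> bool" where
  "ordered_eigenvalues Lm \<rho> \<longleftrightarrow>
     (\<forall>j k. 1 \<le> j \<and> j \<le> k \<and> k \<le> CARD('n) \<longrightarrow> \<rho> j \<le> \<rho> k) \<and>
     (\<exists>v :: nat \<Rightarrow> real^'n.
        (\<forall>j\<in>{1..CARD('n)}. \<forall>k\<in>{1..CARD('n)}. v j \<bullet> v k = (if j = k then 1 else 0)) \<and>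
        (\<forall>j\<in>{1..CARD('n)}. Lm *v v j = \<rho> j *\<^sub>R v j))"

(* \<hat>L W = (L \<otimes> I_d) W, with W = stacked agent vectors W $ i *)
definition Lhat :: "real^'n^'n \<Rightarrow> 'a::real_vector^'n \<Rightarrow> 'a^'n" where
  "Lhat Lm W = (\<chi> i. \<Sum>j\<in>UNIV. Lm $ i $ j *\<^sub>R W $ j)"

definition Gfun :: "('n \<Rightarrow> 'a::real_inner \<Rightarrow> real) \<Rightarrow> real^'n^'n \<Rightarrow> real \<Rightarrow> real \<Rightarrow> 'a^'n \<Rightarrow> real" where
  "Gfun f Lm \<gamma> \<eta> W = (\<Sum>i\<in>UNIV. f i (W $ i)) + \<gamma> / (2 * \<eta>) * (W \<bullet> Lhat Lm W)"

definition prodset :: "'a set \<Rightarrow> ('a^'n) set" where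
  "prodset S = {W. \<forall>i. W $ i \<in> S}"

end

theory Submission
  imports Defs
begin

lemma orthonormal_expand:
  fixes v :: "nat \<Rightarrow> real^'n::finite"
  assumes on: "\<forall>j\<in>{1..CARD('n)}. \<forall>k\<in>{1..CARD('n)}. v j \<bullet> v k = (if j = k then 1 else 0)"
  shows "x = (\<Sum>j\<in>{1..CARD('n)}. (x \<bullet> v j) *\<^sub>R v j)"
proof -
  let ?I = "{1..CARD('n)}"
  have inj: "inj_on v ?I"
  proof (rule inj_onI)
    fix j k assume "j \<in> ?I" "k \<in> ?I" "v j = v k"
    then show "j = k" using on by (metis zero_neq_one)
  qed
  have card: "card (v ` ?I) = CARD('n)" using inj by (simp add: card_image)
  have ind: "independent (v ` ?I)"
  proof (rule pairwise_orthogonal_independent)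
    show "pairwise orthogonal (v ` ?I)" using on
      unfolding pairwise_def orthogonal_def by auto
    show "0 \<notin> v ` ?I" using on by force
  qed
  have sp: "UNIV \<subseteq> span (v ` ?I)"
    using card_ge_dim_independent[of "v ` ?I" UNIV] ind card by simp
  define y where "y = x - (\<Sum>j\<in>?I. (x \<bullet> v j) *\<^sub>R v j)"
  have yo: "y \<bullet> v k = 0" if "k \<in> ?I" for k
  proof -
    have "(\<Sum>j\<in>?I. (x \<bullet> v j) *\<^sub>R v j) \<bullet> v k = (\<Sum>j\<in>?I. (x \<bullet> v j) * (v j \<bullet> v k))"
      by (simp add: inner_sum_left)
    also have "\<dots> = (\<Sum>j\<in>?I. if j = k then x \<bullet> v k else 0)"
      using on that by (intro sum.cong) auto
    also have "\<dots> = x \<bullet> v k" using that by simp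
    finally show ?thesis unfolding y_def by (simp add: inner_diff_left)
  qed
  have "orthogonal y y"
    by (rule orthogonal_to_span[of y "v ` ?I"]) (use sp yo in \<open>auto simp: orthogonal_def\<close>)
  then have "y = 0" by (simp add: orthogonal_def)
  then show ?thesis unfolding y_def by simp
qed

lemma lap_sym:
  fixes Lm :: "real^'n::finite^'n"
  assumes "transpose Lm = Lm"
  shows "(Lm *v x) \<bullet> y = x \<bullet> (Lm *v y)"
proof -
  have "Lm *v x = x v* Lm" by (metis assms transpose_matrix_vector)
  then show ?thesis by (simp add: dot_lmul_matrix)
qed

lemma lap_quad_perp:
  fixes Lm :: "real^'n::finite^'n" and y :: "real^'n"
  assumes lap: "laplacian_matrix Lm" and eig: "ordered_eigenvalues Lm \<rho>"
    and rho2: "\<rho> 2 > 0" and N2: "CARD('n) \<ge> 2" and y1: "y \<bullet> 1 = 0"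
  shows "y \<bullet> (Lm *v y) \<ge> \<rho> 2 * (y \<bullet> y)"
proof -
  let ?I = "{1..CARD('n)}"
  have sym: "transpose Lm = Lm" and L1: "Lm *v 1 = 0" using lap unfolding laplacian_matrix_def by auto
  obtain v where on: "\<forall>j\<in>?I. \<forall>k\<in>?I. v j \<bullet> v k = (if j = k then 1 else 0)"
    and ev: "\<forall>j\<in>?I. Lm *v v j = \<rho> j *\<^sub>R v j"
    and mono: "\<forall>j k. 1 \<le> j \<and> j \<le> k \<and> k \<le> CARD('n) \<longrightarrow> \<rho> j \<le> \<rho> k"
    using eig unfolding ordered_eigenvalues_def by blast
  have exp: "\<And>x z. x \<bullet> z = (\<Sum>j\<in>?I. (x \<bullet> v j) * (v j \<bullet> z))"
  proof -
    fix x z :: "real^'n"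
    have "x \<bullet> z = (\<Sum>j\<in>?I. (x \<bullet> v j) *\<^sub>R v j) \<bullet> z"
      using orthonormal_expand[OF on, of x] by simp
    then show "x \<bullet> z = (\<Sum>j\<in>?I. (x \<bullet> v j) * (v j \<bullet> z))" by (simp add: inner_sum_left)
  qed
  define c where "c j = (1::real^'n) \<bullet> v j" for j
  have c0: "c k = 0" if "k \<in> {2..CARD('n)}" for k
  proof -
    have kI: "k \<in> ?I" using that by auto
    have "0 = (Lm *v 1) \<bullet> v k" using L1 by simp
    also have "\<dots> = 1 \<bullet> (Lm *v v k)" by (rule lap_sym[OF sym])
    also have "\<dots> = \<rho> k * c k" using ev kI by (simp add: c_def)
    finally have "\<rho> k * c k = 0" by simp
    moreover have "\<rho> k \<ge> \<rho> 2" using mono that by auto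
    ultimately show ?thesis using rho2 by auto
  qed
  have one_exp: "(1::real^'n) \<bullet> z = c 1 * (v 1 \<bullet> z)" for z
  proof -
    have "(1::real^'n) \<bullet> z = (\<Sum>j\<in>?I. c j * (v j \<bullet> z))" using exp[of 1 z] by (simp add: c_def)
    also have "\<dots> = (\<Sum>j\<in>{1}. c j * (v j \<bullet> z))"
      by (rule sum.mono_neutral_right) (use c0 N2 in auto)
    finally show ?thesis by simp
  qed
  have c1: "c 1 \<noteq> 0"
  proof
    assume "c 1 = 0"
    then have "(1::real^'n) \<bullet> 1 = 0" using one_exp[of 1] by simp
    then show False by simp
  qed
  have yv1: "y \<bullet> v 1 = 0"
  proof -
    have "c 1 * (v 1 \<bullet> y) = 0" using one_exp[of y] y1 by (simp add: inner_commute)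
    then show ?thesis using c1 by (simp add: inner_commute)
  qed
  have q: "y \<bullet> (Lm *v y) = (\<Sum>j\<in>?I. \<rho> j * (y \<bullet> v j)^2)"
  proof -
    have "y \<bullet> (Lm *v y) = (\<Sum>j\<in>?I. (y \<bullet> v j) * (v j \<bullet> (Lm *v y)))" by (rule exp)
    also have "\<dots> = (\<Sum>j\<in>?I. \<rho> j * (y \<bullet> v j)^2)"
    proof (rule sum.cong[OF refl])
      fix j assume j: "j \<in> ?I"
      have "v j \<bullet> (Lm *v y) = (Lm *v v j) \<bullet> y" by (rule lap_sym[OF sym, symmetric])
      also have "\<dots> = \<rho> j * (y \<bullet> v j)" using ev j by (simp add: inner_commute)
      finally show "(y \<bullet> v j) * (v j \<bullet> (Lm *v y)) = \<rho> j * (y \<bullet> v j)^2"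
        by (simp add: power2_eq_square)
    qed
    finally show ?thesis .
  qed
  have yy: "y \<bullet> y = (\<Sum>j\<in>?I. (y \<bullet> v j)^2)"
    using exp[of y y] by (simp add: power2_eq_square inner_commute)
  have "\<rho> 2 * (y \<bullet> y) = (\<Sum>j\<in>?I. \<rho> 2 * (y \<bullet> v j)^2)" by (simp add: yy sum_distrib_left)
  also have "\<dots> \<le> (\<Sum>j\<in>?I. \<rho> j * (y \<bullet> v j)^2)"
  proof (rule sum_mono)
    fix j assume j: "j \<in> ?I"
    show "\<rho> 2 * (y \<bullet> v j)^2 \<le> \<rho> j * (y \<bullet> v j)^2"
    proof (cases "j = 1")
      case True then show ?thesis using yv1 by simp
    next
      case False then have "\<rho> 2 \<le> \<rho> j" using mono j by auto
      then show ?thesis by (simp add: mult_right_mono)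
    qed
  qed
  finally show ?thesis using q by simp
qed

definition avg :: "'a::real_vector^'n::finite \<Rightarrow> 'a" where
  "avg W = (1 / real CARD('n)) *\<^sub>R (\<Sum>i\<in>UNIV. W $ i)"

definition dev :: "'a::real_vector^'n::finite \<Rightarrow> 'a^'n" where
  "dev W = W - vec (avg W)"

lemma inner_vec_sum: "(W::'a::real_inner^'n::finite) \<bullet> V = (\<Sum>i\<in>UNIV. W $ i \<bullet> V $ i)"
  by (simp add: inner_vec_def)

lemma norm_vec_sq: "(norm (W::'a::real_inner^'n::finite))^2 = (\<Sum>i\<in>UNIV. (norm (W $ i))^2)"
  by (simp add: power2_norm_eq_inner inner_vec_sum)

lemma norm_vec_const_sq: "(norm (vec w :: 'a::real_inner^'n::finite))^2 = real CARD('n) * (norm w)^2"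
  by (simp add: norm_vec_sq vec_def)

lemma inner_vec_const: "(vec w :: 'a::real_inner^'n::finite) \<bullet> V = w \<bullet> (\<Sum>i\<in>UNIV. V $ i)"
  by (simp add: inner_vec_sum vec_def inner_sum_right)

lemma sum_dev: "(\<Sum>i\<in>UNIV. dev (W::'a::real_vector^'n::finite) $ i) = 0"
proof -
  have "(\<Sum>i\<in>UNIV. dev W $ i) = (\<Sum>i\<in>UNIV. W $ i) - real CARD('n) *\<^sub>R avg W"
    by (simp add: dev_def vec_def sum_subtractf sum_constant_scaleR)
  also have "real CARD('n) *\<^sub>R avg W = (\<Sum>i\<in>UNIV. W $ i)" by (simp add: avg_def)
  finally show ?thesis by simp
qed

lemma inner_sum0_dev:
  fixes V W :: "'a::real_inner^'n::finite"
  assumes "(\<Sum>i\<in>UNIV. V $ i) = 0"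
  shows "V \<bullet> W = V \<bullet> dev W"
proof -
  have "V \<bullet> vec (avg W) = vec (avg W) \<bullet> V" by (rule inner_commute)
  also have "\<dots> = 0" using assms by (simp add: inner_vec_const)
  finally have "V \<bullet> vec (avg W) = 0" .
  then show ?thesis by (simp add: dev_def inner_diff_right)
qed

lemma dev_decomp: "(W::'a::real_vector^'n::finite) = vec (avg W) + dev W"
  by (simp add: dev_def)

lemma dev_diff: "dev ((W::'a::real_vector^'n::finite) - V) = dev W - dev V"
  by (simp add: dev_def avg_def sum_subtractf vec_def vec_eq_iff scaleR_diff_right)

lemma norm_dev_le: "norm (dev (W::'a::real_inner^'n::finite)) \<le> norm W"
proof -
  have o: "vec (avg W) \<bullet> dev W = 0" using sum_dev[of W] by (simp add: inner_vec_const)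
  have o2: "dev W \<bullet> vec (avg W) = 0" using o by (simp add: inner_commute)
  have "(norm W)^2 = (norm (vec (avg W) :: 'a^'n))^2 + (norm (dev W))^2"
    by (subst dev_decomp) (simp add: power2_norm_eq_inner inner_add_left inner_add_right o o2)
  then have "(norm (dev W))^2 \<le> (norm W)^2" by simp
  then show ?thesis by (simp add: power2_le_iff_abs_le)
qed

lemma Lhat_nth: "Lhat Lm W $ i = (\<Sum>j\<in>UNIV. Lm $ i $ j *\<^sub>R W $ j)"
  by (simp add: Lhat_def)

lemma Lhat_diff: "Lhat Lm (U - V) = Lhat Lm U - Lhat Lm V"
  by (simp add: Lhat_def vec_eq_iff scaleR_diff_right sum_subtractf)

lemma Lhat_add: "Lhat Lm (U + V) = Lhat Lm U + Lhat Lm V"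
  by (simp add: Lhat_def vec_eq_iff scaleR_add_right sum.distrib)

lemma Lhat_scale: "Lhat Lm (c *\<^sub>R U) = c *\<^sub>R Lhat Lm U"
  by (simp add: Lhat_def vec_eq_iff scaleR_sum_right mult.commute)

lemma Lhat_linear: "linear (Lhat Lm)"
  by (rule linearI) (simp_all add: Lhat_add Lhat_scale)

lemma lap_rowsum: assumes "laplacian_matrix Lm" shows "(\<Sum>j\<in>UNIV. Lm $ i $ j) = 0"
proof -
  have "Lm *v 1 = 0" using assms unfolding laplacian_matrix_def by auto
  then have "(Lm *v 1) $ i = 0" by simp
  then show ?thesis by (simp add: matrix_vector_mult_def)
qed

lemma lap_colsum: assumes "laplacian_matrix Lm" shows "(\<Sum>i\<in>UNIV. Lm $ i $ j) = 0"
proof -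
  have "transpose Lm = Lm" using assms unfolding laplacian_matrix_def by auto
  then have "Lm $ i $ j = Lm $ j $ i" for i j by (metis transpose_def vec_lambda_beta)
  then show ?thesis using lap_rowsum[OF assms, of j] by simp
qed

lemma Lhat_const: assumes "laplacian_matrix Lm" shows "Lhat Lm (vec w) = 0"
  by (simp add: Lhat_def vec_def vec_eq_iff flip: scaleR_sum_left) (simp add: lap_rowsum[OF assms])

lemma Lhat_sum0: assumes "laplacian_matrix Lm" shows "(\<Sum>i\<in>UNIV. Lhat Lm W $ i) = 0"
proof -
  have "(\<Sum>i\<in>UNIV. Lhat Lm W $ i) = (\<Sum>j\<in>UNIV. \<Sum>i\<in>UNIV. Lm $ i $ j *\<^sub>R W $ j)"
    by (simp add: Lhat_def) (rule sum.swap)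
  also have "\<dots> = (\<Sum>j\<in>UNIV. (\<Sum>i\<in>UNIV. Lm $ i $ j) *\<^sub>R W $ j)"
    by (simp add: scaleR_sum_left)
  also have "\<dots> = 0" by (simp add: lap_colsum[OF assms])
  finally show ?thesis .
qed

lemma Lhat_sym:
  assumes "laplacian_matrix Lm" shows "Lhat Lm U \<bullet> V = U \<bullet> Lhat Lm V"
proof -
  have "transpose Lm = Lm" using assms unfolding laplacian_matrix_def by auto
  then have s: "Lm $ i $ j = Lm $ j $ i" for i j by (metis transpose_def vec_lambda_beta)
  have "Lhat Lm U \<bullet> V = (\<Sum>i\<in>UNIV. \<Sum>j\<in>UNIV. Lm $ i $ j * (U $ j \<bullet> V $ i))"
    by (simp add: inner_vec_sum Lhat_def inner_sum_left)
  also have "\<dots> = (\<Sum>j\<in>UNIV. \<Sum>i\<in>UNIV. Lm $ i $ j * (U $ j \<bullet> V $ i))" by (rule sum.swap)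
  also have "\<dots> = U \<bullet> Lhat Lm V"
    by (simp add: inner_vec_sum Lhat_def inner_sum_right s)
  finally show ?thesis .
qed

lemma Lhat_bounded: obtains K where "K > 0" "\<And>W. norm (Lhat Lm (W::'a::euclidean_space^'n::finite)) \<le> K * norm W"
  using linear_bounded_pos[OF Lhat_linear] by blast

lemma Lhat_quad_dev0:
  fixes D :: "'a::euclidean_space^'n::finite"
  assumes lap: "laplacian_matrix Lm" and eig: "ordered_eigenvalues Lm \<rho>"
    and rho2: "\<rho> 2 > 0" and N2: "CARD('n) \<ge> 2" and s0: "(\<Sum>i\<in>UNIV. D $ i) = 0"
  shows "D \<bullet> Lhat Lm D \<ge> \<rho> 2 * (norm D)^2"
proof -
  define u where "u b = (\<chi> i. D $ i \<bullet> b)" for b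
  have u1: "u b \<bullet> 1 = 0" for b
  proof -
    have "u b \<bullet> 1 = (\<Sum>i\<in>UNIV. D $ i \<bullet> b)" by (simp add: u_def inner_vec_def)
    also have "\<dots> = (\<Sum>i\<in>UNIV. D $ i) \<bullet> b" by (simp add: inner_sum_left)
    finally show ?thesis using s0 by simp
  qed
  have Lu: "(Lm *v u b) $ i = Lhat Lm D $ i \<bullet> b" for b i
    by (simp add: u_def matrix_vector_mult_def Lhat_def inner_sum_left)
  have "D \<bullet> Lhat Lm D = (\<Sum>i\<in>UNIV. \<Sum>b\<in>Basis. (D $ i \<bullet> b) * (Lhat Lm D $ i \<bullet> b))"
    unfolding inner_vec_sum by (rule sum.cong[OF refl], rule euclidean_inner)
  also have "\<dots> = (\<Sum>b\<in>Basis. \<Sum>i\<in>UNIV. (D $ i \<bullet> b) * (Lhat Lm D $ i \<bullet> b))" by (rule sum.swap)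
  also have "\<dots> = (\<Sum>b\<in>Basis. u b \<bullet> (Lm *v u b))"
    by (simp add: inner_vec_def Lu) (simp add: u_def)
  finally have e1: "D \<bullet> Lhat Lm D = (\<Sum>b\<in>Basis. u b \<bullet> (Lm *v u b))" .
  have "(norm D)^2 = (\<Sum>i\<in>UNIV. \<Sum>b\<in>Basis. (D $ i \<bullet> b) * (D $ i \<bullet> b))"
    unfolding power2_norm_eq_inner inner_vec_sum by (rule sum.cong[OF refl], rule euclidean_inner)
  also have "\<dots> = (\<Sum>b\<in>Basis. \<Sum>i\<in>UNIV. (D $ i \<bullet> b) * (D $ i \<bullet> b))" by (rule sum.swap)
  also have "\<dots> = (\<Sum>b\<in>Basis. u b \<bullet> u b)"
    by (simp add: inner_vec_def u_def)
  finally have e2: "(norm D)^2 = (\<Sum>b\<in>Basis. u b \<bullet> u b)" .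
  have "\<rho> 2 * (norm D)^2 = (\<Sum>b\<in>Basis. \<rho> 2 * (u b \<bullet> u b))" by (simp add: e2 sum_distrib_left)
  also have "\<dots> \<le> (\<Sum>b\<in>Basis. u b \<bullet> (Lm *v u b))"
    by (rule sum_mono) (rule lap_quad_perp[OF lap eig rho2 N2 u1])
  finally show ?thesis using e1 by simp
qed

lemma Lhat_quad:
  fixes W :: "'a::euclidean_space^'n::finite"
  assumes lap: "laplacian_matrix Lm" and eig: "ordered_eigenvalues Lm \<rho>"
    and rho2: "\<rho> 2 > 0" and N2: "CARD('n) \<ge> 2"
  shows "W \<bullet> Lhat Lm W \<ge> \<rho> 2 * (norm (dev W))^2"
proof -
  have "W \<bullet> Lhat Lm W = dev W \<bullet> Lhat Lm (dev W)"
  proof -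
    have "Lhat Lm W = Lhat Lm (dev W)"
      by (simp add: dev_def Lhat_diff Lhat_const[OF lap])
    moreover have "W \<bullet> Lhat Lm (dev W) = dev W \<bullet> Lhat Lm (dev W)"
      using inner_sum0_dev[OF Lhat_sum0[OF lap], of "dev W" W] by (simp add: inner_commute)
    ultimately show ?thesis by simp
  qed
  then show ?thesis using Lhat_quad_dev0[OF lap eig rho2 N2 sum_dev] by simp
qed

lemma Lhat_psd:
  fixes W :: "'a::euclidean_space^'n::finite"
  assumes lap: "laplacian_matrix Lm" and eig: "ordered_eigenvalues Lm \<rho>"
    and rho2: "\<rho> 2 > 0" and N2: "CARD('n) \<ge> 2"
  shows "W \<bullet> Lhat Lm W \<ge> 0"
  using Lhat_quad[OF assms, of W] rho2 by (meson order_trans mult_nonneg_nonneg less_imp_le zero_le_power2)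

lemma sc_first_order:
  fixes g :: "'a::real_inner \<Rightarrow> real"
  assumes sc: "strongly_convex \<mu> g" and gd: "\<forall>z. GDERIV g z :> dg z"
  shows "g x + dg x \<bullet> (y - x) + \<mu> / 2 * (norm (y - x))^2 \<le> g y"
proof -
  define D where "D = dg x \<bullet> (y - x)"
  have der: "((\<lambda>t. g (x + t *\<^sub>R (y - x))) has_derivative (\<lambda>t. t * D)) (at 0)"
  proof -
    have "((\<lambda>t. g (x + t *\<^sub>R (y - x))) has_derivative (\<lambda>t. (t *\<^sub>R (y - x)) \<bullet> dg (x + 0 *\<^sub>R (y - x)))) (at 0)"
      using gd unfolding gderiv_def
      by (intro has_derivative_compose[where f="\<lambda>t. x + t *\<^sub>R (y - x)" and g=g, unfolded o_def])
         (auto intro!: derivative_eq_intros)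
    then show ?thesis by (simp add: D_def inner_commute)
  qed
  then have "((\<lambda>t. g (x + t *\<^sub>R (y - x))) has_field_derivative D) (at 0)"
    unfolding has_field_derivative_def by (rule has_derivative_eq_rhs) (auto simp: mult.commute)
  then have "((\<lambda>t. g (x + t *\<^sub>R (y - x))) has_field_derivative D) (at 0 within {0<..})"
    by (rule has_field_derivative_at_within)
  then have lim: "((\<lambda>t. (g (x + t *\<^sub>R (y - x)) - g x) / t) \<longlongrightarrow> D) (at_right 0)"
    by (simp add: has_field_derivative_iff)
  have lim2: "((\<lambda>t. g y - g x - \<mu> / 2 * (1 - t) * (norm (y - x))^2) \<longlongrightarrow> g y - g x - \<mu> / 2 * (1 - 0) * (norm (y - x))^2) (at_right 0)"
    by (intro tendsto_intros)
  have ev: "eventually (\<lambda>t. (g (x + t *\<^sub>R (y - x)) - g x) / t \<le> g y - g x - \<mu> / 2 * (1 - t) * (norm (y - x))^2) (at_right (0::real))"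
  proof -
    have "eventually (\<lambda>t. 0 < t \<and> t < 1) (at_right (0::real))"
      by (simp add: eventually_at_right_field) (metis zero_less_one)
    then show ?thesis
    proof (rule eventually_mono)
      fix t :: real assume t: "0 < t \<and> t < 1"
      have "g (t *\<^sub>R y + (1 - t) *\<^sub>R x) \<le> t * g y + (1 - t) * g x - \<mu> / 2 * t * (1 - t) * (norm (y - x))\<^sup>2"
        using sc t unfolding strongly_convex_def by auto
      moreover have "t *\<^sub>R y + (1 - t) *\<^sub>R x = x + t *\<^sub>R (y - x)" by (simp add: algebra_simps)
      ultimately have "g (x + t *\<^sub>R (y - x)) - g x \<le> t * (g y - g x - \<mu> / 2 * (1 - t) * (norm (y - x))\<^sup>2)"
        by (simp add: algebra_simps)
      then show "(g (x + t *\<^sub>R (y - x)) - g x) / t \<le> g y - g x - \<mu> / 2 * (1 - t) * (norm (y - x))^2"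
        using t by (simp add: divide_le_eq mult.commute)
    qed
  qed
  have "D \<le> g y - g x - \<mu> / 2 * (1 - 0) * (norm (y - x))^2"
    by (rule tendsto_le[OF _ lim2 lim ev]) simp
  then show ?thesis by (simp add: D_def)
qed

lemma sc_monotone:
  fixes g :: "'a::real_inner \<Rightarrow> real"
  assumes sc: "strongly_convex \<mu> g" and gd: "\<forall>z. GDERIV g z :> dg z"
  shows "\<mu> * (norm (x - y))^2 \<le> (dg x - dg y) \<bullet> (x - y)"
proof -
  have 1: "g x + dg x \<bullet> (y - x) + \<mu> / 2 * (norm (y - x))^2 \<le> g y" by (rule sc_first_order[OF sc gd])
  have 2: "g y + dg y \<bullet> (x - y) + \<mu> / 2 * (norm (x - y))^2 \<le> g x" by (rule sc_first_order[OF sc gd])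
  have n: "norm (y - x) = norm (x - y)" by (rule norm_minus_commute)
  have "dg x \<bullet> (y - x) = - (dg x \<bullet> (x - y))" by (simp add: inner_diff_right)
  then show ?thesis using 1 2 n by (simp add: inner_diff_left algebra_simps)
qed

definition Phi :: "('n::finite \<Rightarrow> 'a \<Rightarrow> 'a) \<Rightarrow> 'a^'n \<Rightarrow> 'a^'n" where
  "Phi grad W = (\<chi> i. grad i (W $ i))"

lemma Phi_monotone:
  fixes f :: "'n::finite \<Rightarrow> 'a::real_inner \<Rightarrow> real"
  assumes sc: "\<forall>i. strongly_convex \<mu> (f i)" and sm: "\<forall>i z. GDERIV (f i) z :> grad i z"
  shows "\<mu> * (norm (X - Y))^2 \<le> (Phi grad X - Phi grad Y) \<bullet> (X - Y)"
proof -
  have "\<mu> * (norm (X - Y))^2 = (\<Sum>i\<in>UNIV. \<mu> * (norm (X $ i - Y $ i))^2)"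
    by (simp add: norm_vec_sq sum_distrib_left)
  also have "\<dots> \<le> (\<Sum>i\<in>UNIV. (grad i (X $ i) - grad i (Y $ i)) \<bullet> (X $ i - Y $ i))"
    by (rule sum_mono, rule sc_monotone) (use sc sm in auto)
  also have "\<dots> = (Phi grad X - Phi grad Y) \<bullet> (X - Y)"
    by (simp add: inner_vec_sum Phi_def)
  finally show ?thesis .
qed

lemma Phi_lipschitz:
  fixes grad :: "'n::finite \<Rightarrow> 'a::real_inner \<Rightarrow> 'a"
  assumes lip: "\<forall>i. Lc-lipschitz_on UNIV (grad i)"
  shows "norm (Phi grad X - Phi grad Y) \<le> Lc * norm (X - Y)"
proof -
  have L0: "Lc \<ge> 0" using lip unfolding lipschitz_on_def by auto
  have "(norm (Phi grad X - Phi grad Y))^2 = (\<Sum>i\<in>UNIV. (norm (grad i (X $ i) - grad i (Y $ i)))^2)"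
    by (simp add: norm_vec_sq Phi_def)
  also have "\<dots> \<le> (\<Sum>i\<in>UNIV. (Lc * norm (X $ i - Y $ i))^2)"
  proof (rule sum_mono)
    fix i
    have "norm (grad i (X $ i) - grad i (Y $ i)) \<le> Lc * norm (X $ i - Y $ i)"
      using lip unfolding lipschitz_on_def by (simp add: dist_norm)
    then show "(norm (grad i (X $ i) - grad i (Y $ i)))^2 \<le> (Lc * norm (X $ i - Y $ i))^2"
      by (simp add: power_mono)
  qed
  also have "\<dots> = (Lc * norm (X - Y))^2"
    by (simp add: norm_vec_sq power_mult_distrib sum_distrib_left)
  finally show ?thesis using L0 by (simp add: power2_le_iff_abs_le)
qed

lemma Phi_continuous:
  fixes grad :: "'n::finite \<Rightarrow> 'a::real_inner \<Rightarrow> 'a"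
  assumes lip: "\<forall>i. Lc-lipschitz_on UNIV (grad i)"
  shows "continuous_on UNIV (Phi grad)"
proof -
  have "Lc-lipschitz_on UNIV (Phi grad)"
    using Phi_lipschitz[OF lip] lip unfolding lipschitz_on_def by (simp add: dist_norm)
  then show ?thesis by (rule lipschitz_on_continuous_on)
qed

lemma Gfun_deriv:
  fixes f :: "'n::finite \<Rightarrow> 'a::euclidean_space \<Rightarrow> real"
  assumes lap: "laplacian_matrix Lm" and sm: "\<forall>i z. GDERIV (f i) z :> grad i z"
  shows "GDERIV (Gfun f Lm \<gamma> \<eta>) W :> (Phi grad W + (\<gamma> / \<eta>) *\<^sub>R Lhat Lm W)"
proof -
  have d1: "((\<lambda>W. f i (W $ i)) has_derivative (\<lambda>h. (h $ i) \<bullet> grad i (W $ i))) (at W)" for i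
    using sm unfolding gderiv_def
    by (intro has_derivative_compose[where f="\<lambda>W. W $ i" and g="f i", unfolded o_def])
       (auto intro!: bounded_linear_imp_has_derivative)
  have d2: "((\<lambda>W. \<Sum>i\<in>UNIV. f i (W $ i)) has_derivative (\<lambda>h. \<Sum>i\<in>UNIV. (h $ i) \<bullet> grad i (W $ i))) (at W)"
    by (rule has_derivative_sum) (use d1 in auto)
  have dL: "(Lhat Lm has_derivative Lhat Lm) (at W)"
    by (rule linear_imp_has_derivative[OF Lhat_linear])
  have d3: "((\<lambda>W. W \<bullet> Lhat Lm W) has_derivative (\<lambda>h. W \<bullet> Lhat Lm h + h \<bullet> Lhat Lm W)) (at W)"
    by (rule has_derivative_inner[OF has_derivative_ident dL])
  have d4: "((\<lambda>W. \<gamma> / (2 * \<eta>) * (W \<bullet> Lhat Lm W)) has_derivative (\<lambda>h. \<gamma> / (2 * \<eta>) * (W \<bullet> Lhat Lm h + h \<bullet> Lhat Lm W))) (at W)"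
    by (rule has_derivative_mult_right[OF d3])
  have d5: "(Gfun f Lm \<gamma> \<eta> has_derivative (\<lambda>h. (\<Sum>i\<in>UNIV. (h $ i) \<bullet> grad i (W $ i)) + \<gamma> / (2 * \<eta>) * (W \<bullet> Lhat Lm h + h \<bullet> Lhat Lm W))) (at W)"
    unfolding Gfun_def[abs_def] by (rule has_derivative_add[OF d2 d4])
  have eq: "(\<Sum>i\<in>UNIV. (h $ i) \<bullet> grad i (W $ i)) + \<gamma> / (2 * \<eta>) * (W \<bullet> Lhat Lm h + h \<bullet> Lhat Lm W)
      = h \<bullet> (Phi grad W + (\<gamma> / \<eta>) *\<^sub>R Lhat Lm W)" for h
  proof -
    have "W \<bullet> Lhat Lm h = h \<bullet> Lhat Lm W"
      using Lhat_sym[OF lap, of W h] by (simp add: inner_commute)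
    moreover have "(\<Sum>i\<in>UNIV. (h $ i) \<bullet> grad i (W $ i)) = h \<bullet> Phi grad W"
      by (simp add: inner_vec_sum Phi_def)
    ultimately show ?thesis by (simp add: inner_add_right)
  qed
  show ?thesis unfolding gderiv_def using d5 by (simp only: eq)
qed

lemma gradG_eq:
  fixes f :: "'n::finite \<Rightarrow> 'a::euclidean_space \<Rightarrow> real"
  assumes lap: "laplacian_matrix Lm" and sm: "\<forall>i z. GDERIV (f i) z :> grad i z"
    and g: "GDERIV (Gfun f Lm \<gamma> \<eta>) W :> G"
  shows "G = Phi grad W + (\<gamma> / \<eta>) *\<^sub>R Lhat Lm W"
proof -
  have "(\<lambda>h. h \<bullet> G) = (\<lambda>h. h \<bullet> (Phi grad W + (\<gamma> / \<eta>) *\<^sub>R Lhat Lm W))"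
    using has_derivative_unique g Gfun_deriv[OF lap sm] unfolding gderiv_def by blast
  then have "(G - (Phi grad W + (\<gamma> / \<eta>) *\<^sub>R Lhat Lm W)) \<bullet> G = (G - (Phi grad W + (\<gamma> / \<eta>) *\<^sub>R Lhat Lm W)) \<bullet> (Phi grad W + (\<gamma> / \<eta>) *\<^sub>R Lhat Lm W)"
    by metis
  then have "(G - (Phi grad W + (\<gamma> / \<eta>) *\<^sub>R Lhat Lm W)) \<bullet> (G - (Phi grad W + (\<gamma> / \<eta>) *\<^sub>R Lhat Lm W)) = 0"
    by (simp add: inner_diff_right)
  then show ?thesis by simp
qed

locale detset =
  fixes Ph :: "'a::euclidean_space^'n::finite \<Rightarrow> 'a^'n" and Lm :: "real^'n^'n" and \<rho> :: "nat \<Rightarrow> real"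
    and \<mu> Lc K :: real
  assumes mono: "\<And>X Y. \<mu> * (norm (X - Y))^2 \<le> (Ph X - Ph Y) \<bullet> (X - Y)"
    and lip: "\<And>X Y. norm (Ph X - Ph Y) \<le> Lc * norm (X - Y)"
    and lap: "laplacian_matrix Lm" and eig: "ordered_eigenvalues Lm \<rho>"
    and rho2: "\<rho> 2 > 0" and N2: "CARD('n) \<ge> 2"
    and Kpos: "K > 0" and LK: "\<And>W::'a^'n. norm (Lhat Lm W) \<le> K * norm W"
    and mu_pos: "\<mu> > 0" and mu_le: "\<mu> \<le> Lc"
begin

lemma contraction:
  assumes b: "b \<ge> 0" and t: "t \<ge> 0"
  shows "(norm ((X - t *\<^sub>R (Ph X + b *\<^sub>R Lhat Lm X)) - (Y - t *\<^sub>R (Ph Y + b *\<^sub>R Lhat Lm Y))))^2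
     \<le> (1 - 2 * t * \<mu> + t^2 * (Lc + b * K)^2) * (norm (X - Y))^2"
proof -
  define D where "D = X - Y"
  define S where "S = (Ph X + b *\<^sub>R Lhat Lm X) - (Ph Y + b *\<^sub>R Lhat Lm Y)"
  have S: "S = (Ph X - Ph Y) + b *\<^sub>R Lhat Lm D"
    by (simp add: S_def D_def Lhat_diff algebra_simps)
  have e: "(X - t *\<^sub>R (Ph X + b *\<^sub>R Lhat Lm X)) - (Y - t *\<^sub>R (Ph Y + b *\<^sub>R Lhat Lm Y)) = D - t *\<^sub>R S"
    by (simp add: S_def D_def algebra_simps)
  have q: "D \<bullet> Lhat Lm D \<ge> 0" by (rule Lhat_psd[OF lap eig rho2 N2])
  have m: "S \<bullet> D \<ge> \<mu> * (norm D)^2"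
  proof -
    have "S \<bullet> D = (Ph X - Ph Y) \<bullet> (X - Y) + b * (Lhat Lm D \<bullet> D)"
      by (simp add: S D_def inner_add_left)
    moreover have "Lhat Lm D \<bullet> D = D \<bullet> Lhat Lm D" by (rule inner_commute)
    ultimately have "S \<bullet> D = (Ph X - Ph Y) \<bullet> (X - Y) + b * (D \<bullet> Lhat Lm D)" by simp
    moreover have "b * (D \<bullet> Lhat Lm D) \<ge> 0" using q b by simp
    ultimately show ?thesis using mono[of X Y] unfolding D_def by linarith
  qed
  have n: "norm S \<le> (Lc + b * K) * norm D"
  proof -
    have "norm S \<le> norm (Ph X - Ph Y) + norm (b *\<^sub>R Lhat Lm D)" unfolding S by (rule norm_triangle_ineq)
    also have "\<dots> \<le> Lc * norm D + b * (K * norm D)"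
    proof -
      have "b * norm (Lhat Lm D) \<le> b * (K * norm D)" using LK[of D] b by (rule mult_left_mono)
      then show ?thesis using lip[of X Y] b by (simp add: D_def)
    qed
    finally show ?thesis by (simp add: algebra_simps)
  qed
  have "(norm (D - t *\<^sub>R S))^2 = D \<bullet> D - 2 * t * (S \<bullet> D) + t^2 * (S \<bullet> S)"
    unfolding power2_norm_eq_inner by (simp add: inner_diff_left inner_diff_right inner_commute[of D S] power2_eq_square algebra_simps)
  also have "\<dots> = (norm D)^2 - 2 * t * (S \<bullet> D) + t^2 * (norm S)^2" by (simp add: power2_norm_eq_inner)
  also have "\<dots> \<le> (norm D)^2 - 2 * t * (\<mu> * (norm D)^2) + t^2 * ((Lc + b * K) * norm D)^2"
  proof -
    have "2 * t * (\<mu> * (norm D)^2) \<le> 2 * t * (S \<bullet> D)" using m t by (simp add: mult_left_mono)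
    moreover have "(norm S)^2 \<le> ((Lc + b * K) * norm D)^2" using n by (simp add: power_mono)
    then have "t^2 * (norm S)^2 \<le> t^2 * ((Lc + b * K) * norm D)^2" by (simp add: mult_left_mono)
    ultimately show ?thesis by linarith
  qed
  also have "\<dots> = (1 - 2 * t * \<mu> + t^2 * (Lc + b * K)^2) * (norm D)^2"
    by (simp add: power2_eq_square algebra_simps)
  finally show ?thesis unfolding e D_def[symmetric] .
qed

lemma consensus:
  assumes s: "(\<Sum>i\<in>UNIV. (Ph X - Ph Y) $ i) = 0"
  shows "norm (vec (avg (X - Y)) :: 'a^'n) \<le> (Lc / \<mu>) * norm (dev (X - Y))"
proof -
  define Q where "Q = (vec (avg (X - Y)) :: 'a^'n)"
  define P where "P = dev (X - Y)"
  define Z where "Z = Y + Q"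
  have "X - Y = Q + P" unfolding Q_def P_def by (rule dev_decomp)
  then have XZ: "X = Z + P" by (simp add: Z_def algebra_simps)
  have "Q \<bullet> (Ph X - Ph Y) = avg (X - Y) \<bullet> (\<Sum>i\<in>UNIV. (Ph X - Ph Y) $ i)"
    unfolding Q_def by (rule inner_vec_const)
  then have "Q \<bullet> (Ph X - Ph Y) = 0" unfolding s by simp
  moreover have "Q \<bullet> (Ph X - Ph Y) = Q \<bullet> (Ph Z - Ph Y) + Q \<bullet> (Ph X - Ph Z)"
    by (simp add: inner_diff_right)
  ultimately have 0: "Q \<bullet> (Ph Z - Ph Y) = - (Q \<bullet> (Ph X - Ph Z))" by linarith
  have ZY: "Z - Y = Q" by (simp add: Z_def)
  have 1: "\<mu> * (norm Q)^2 \<le> Q \<bullet> (Ph Z - Ph Y)"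
    using mono[of Z Y] unfolding ZY inner_commute[of "Ph Z - Ph Y" Q] .
  have 2: "- (Q \<bullet> (Ph X - Ph Z)) \<le> norm Q * (Lc * norm P)"
  proof -
    have "- (Q \<bullet> (Ph X - Ph Z)) \<le> norm Q * norm (Ph X - Ph Z)"
      by (metis Cauchy_Schwarz_ineq2 abs_le_D2)
    also have "\<dots> \<le> norm Q * (Lc * norm P)"
      using lip[of X Z] XZ by (simp add: mult_left_mono)
    finally show ?thesis .
  qed
  have "\<mu> * (norm Q)^2 \<le> norm Q * (Lc * norm P)" using 0 1 2 by linarith
  then have h: "norm Q * (\<mu> * norm Q) \<le> norm Q * (Lc * norm P)" by (simp add: power2_eq_square mult_ac)
  have "\<mu> * norm Q \<le> Lc * norm P"
  proof (cases "norm Q = 0")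
    case True then show ?thesis using mu_le mu_pos by simp
  next
    case False then have "norm Q > 0" by simp
    then show ?thesis using h by (rule mult_left_le_imp_le[rotated])
  qed
  then show ?thesis unfolding Q_def P_def using mu_pos by (simp add: field_simps)
qed

lemma key:
  assumes b: "b > 0" and s: "(\<Sum>i\<in>UNIV. (Ph X - Ph Y) $ i) = 0"
    and r: "Ph X - Ph Y + b *\<^sub>R Lhat Lm (X - Y) = R" and sr: "(\<Sum>i\<in>UNIV. R $ i) = 0"
  shows "norm (X - Y) \<le> (1 + Lc / \<mu>) * (norm R / (b * \<rho> 2))"
proof -
  define D where "D = X - Y"
  have "R \<bullet> D = (Ph X - Ph Y) \<bullet> D + b * (Lhat Lm D \<bullet> D)"
    unfolding r[symmetric] D_def by (simp add: inner_add_left)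
  moreover have "(Ph X - Ph Y) \<bullet> D \<ge> 0"
    using mono[of X Y] unfolding D_def by (meson mu_pos less_imp_le mult_nonneg_nonneg order_trans zero_le_power2)
  moreover have "Lhat Lm D \<bullet> D \<ge> \<rho> 2 * (norm (dev D))^2"
    using Lhat_quad[OF lap eig rho2 N2, of D] by (simp add: inner_commute)
  ultimately have 1: "b * (\<rho> 2 * (norm (dev D))^2) \<le> R \<bullet> D"
    using b by (smt (verit) mult_left_mono)
  have "R \<bullet> D = R \<bullet> dev D" by (rule inner_sum0_dev[OF sr])
  also have "\<dots> \<le> norm R * norm (dev D)" by (rule Cauchy_Schwarz_ineq2[THEN abs_le_D1])
  finally have "b * \<rho> 2 * (norm (dev D))^2 \<le> norm R * norm (dev D)" using 1 by (simp add: mult.assoc)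
  then have "b * \<rho> 2 * norm (dev D) \<le> norm R"
    by (cases "norm (dev D) = 0") (auto simp: power2_eq_square mult.assoc[symmetric] mult_le_cancel_right_pos)
  then have dv: "norm (dev D) \<le> norm R / (b * \<rho> 2)" using b rho2 by (simp add: field_simps)
  have "norm D \<le> norm (vec (avg D) :: 'a^'n) + norm (dev D)"
    by (metis dev_decomp norm_triangle_ineq)
  also have "\<dots> \<le> (Lc / \<mu>) * norm (dev D) + norm (dev D)"
    using consensus[OF s] unfolding D_def by simp
  also have "\<dots> = (1 + Lc / \<mu>) * norm (dev D)" by (simp add: algebra_simps)
  also have "\<dots> \<le> (1 + Lc / \<mu>) * (norm R / (b * \<rho> 2))"
    using dv mu_pos mu_le by (intro mult_left_mono) (auto simp: divide_nonneg_nonneg)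
  finally show ?thesis unfolding D_def .
qed

lemma fixpoint_exists:
  assumes b: "b \<ge> 0"
  shows "\<exists>W. Ph W + b *\<^sub>R Lhat Lm W = 0"
proof -
  define L' where "L' = Lc + b * K"
  have "b * K \<ge> 0" using b Kpos by simp
  then have L'pos: "L' \<ge> \<mu>" using mu_le by (simp add: L'_def)
  then have L'0: "L' > 0" using mu_pos by simp
  define t where "t = \<mu> / L'^2"
  define c where "c = sqrt (1 - \<mu>^2 / L'^2)"
  have t0: "t \<ge> 0" using mu_pos by (simp add: t_def)
  have qq: "1 - 2 * t * \<mu> + t^2 * L'^2 = 1 - \<mu>^2 / L'^2"
    using L'0 by (simp add: t_def power2_eq_square field_simps)
  have rat: "\<mu>^2 / L'^2 \<le> 1" using L'pos mu_pos by (simp add: power_mono)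
  have rat2: "\<mu>^2 / L'^2 > 0" using L'0 mu_pos by simp
  have c0: "0 \<le> c" and c1: "c < 1" using rat rat2 by (auto simp: c_def)
  define T where "T W = W - t *\<^sub>R (Ph W + b *\<^sub>R Lhat Lm W)" for W
  have "\<forall>x y. dist (T x) (T y) \<le> c * dist x y"
  proof (intro allI)
    fix x y
    have "(norm (T x - T y))^2 \<le> (1 - \<mu>^2 / L'^2) * (norm (x - y))^2"
      using contraction[OF b t0, of x y] qq unfolding T_def L'_def by simp
    also have "\<dots> = (c * norm (x - y))^2" using rat by (simp add: c_def power_mult_distrib)
    finally have "(norm (T x - T y))^2 \<le> (c * norm (x - y))^2" .
    then show "dist (T x) (T y) \<le> c * dist x y"
      using c0 by (simp add: dist_norm power2_le_iff_abs_le)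
  qed
  then obtain W where "T W = W" using banach_fix_type[OF c0 c1] by blast
  then have "t *\<^sub>R (Ph W + b *\<^sub>R Lhat Lm W) = 0" unfolding T_def by (simp add: algebra_simps)
  moreover have "t > 0" using mu_pos L'0 by (simp add: t_def)
  ultimately show ?thesis by auto
qed

end

lemma sq_bound:
  fixes e :: "'b \<Rightarrow> 'v::euclidean_space"
  assumes P: "prob_space M" and sub: "subalgebra M F"
    and em: "e \<in> borel_measurable M" and S: "S \<ge> 0"
    and v: "AE \<omega> in M. nn_cond_exp M F (\<lambda>x. ennreal ((norm (e x))^2)) \<omega> \<le> ennreal S"
  shows "integrable M (\<lambda>x. (norm (e x))^2)" "(\<integral>x. (norm (e x))^2 \<partial>M) \<le> S"
proof -
  interpret prob_space M by (rule P)
  interpret FS: finite_measure_subalgebra M F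
    by (intro finite_measure_subalgebra.intro finite_measure_subalgebra_axioms.intro finite_measure_axioms sub)
  have gm: "(\<lambda>x. ennreal ((norm (e x))^2)) \<in> borel_measurable M" using em by measurable
  have "(\<integral>\<^sup>+x. ennreal ((norm (e x))^2) \<partial>M) = (\<integral>\<^sup>+x. 1 * ennreal ((norm (e x))^2) \<partial>M)" by simp
  also have "\<dots> = (\<integral>\<^sup>+x. 1 * nn_cond_exp M F (\<lambda>x. ennreal ((norm (e x))^2)) x \<partial>M)"
    by (rule FS.nn_cond_exp_intg[symmetric]) (auto simp: gm)
  also have "\<dots> \<le> (\<integral>\<^sup>+x. ennreal S \<partial>M)"
    by (rule nn_integral_mono_AE) (use v in auto)
  also have "\<dots> = ennreal S" by (simp add: emeasure_space_1)
  finally have nn: "(\<integral>\<^sup>+x. ennreal ((norm (e x))^2) \<partial>M) \<le> ennreal S" .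
  show int: "integrable M (\<lambda>x. (norm (e x))^2)"
    by (rule integrableI_nonneg) (use em nn in \<open>auto simp: top.not_eq_extremum intro: le_less_trans\<close>)
  have "ennreal (\<integral>x. (norm (e x))^2 \<partial>M) = (\<integral>\<^sup>+x. ennreal ((norm (e x))^2) \<partial>M)"
    by (rule nn_integral_eq_integral[OF int, symmetric]) simp
  then have "ennreal (\<integral>x. (norm (e x))^2 \<partial>M) \<le> ennreal S" using nn by simp
  then show "(\<integral>x. (norm (e x))^2 \<partial>M) \<le> S" using S ennreal_le_iff by blast
qed

lemma noise_step:
  fixes A e1 e2 :: "'b \<Rightarrow> 'v::euclidean_space"
  assumes P: "prob_space M" and sub: "subalgebra M F"
    and Am: "A \<in> borel_measurable F" and Ab: "\<forall>\<omega>\<in>space M. norm (A \<omega>) \<le> B"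
    and e1m: "e1 \<in> borel_measurable M" and e2m: "e2 \<in> borel_measurable M"
    and m1: "\<forall>b\<in>Basis. AE \<omega> in M. real_cond_exp M F (\<lambda>x. e1 x \<bullet> b) \<omega> = 0"
    and m2: "\<forall>b\<in>Basis. AE \<omega> in M. real_cond_exp M F (\<lambda>x. e2 x \<bullet> b) \<omega> = 0"
    and orth: "AE \<omega> in M. real_cond_exp M F (\<lambda>x. e1 x \<bullet> e2 x) \<omega> = 0"
    and S1: "S1 \<ge> 0" and S2: "S2 \<ge> 0"
    and v1: "AE \<omega> in M. nn_cond_exp M F (\<lambda>x. ennreal ((norm (e1 x))^2)) \<omega> \<le> ennreal S1"
    and v2: "AE \<omega> in M. nn_cond_exp M F (\<lambda>x. ennreal ((norm (e2 x))^2)) \<omega> \<le> ennreal S2"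
  shows "integrable M (\<lambda>\<omega>. (norm (A \<omega> + c1 *\<^sub>R e1 \<omega> - c2 *\<^sub>R e2 \<omega>))^2)"
    "(\<integral>\<omega>. (norm (A \<omega> + c1 *\<^sub>R e1 \<omega> - c2 *\<^sub>R e2 \<omega>))^2 \<partial>M)
       \<le> (\<integral>\<omega>. (norm (A \<omega>))^2 \<partial>M) + c1^2 * S1 + c2^2 * S2"
proof -
  interpret prob_space M by (rule P)
  interpret FS: finite_measure_subalgebra M F
    by (intro finite_measure_subalgebra.intro finite_measure_subalgebra_axioms.intro finite_measure_axioms sub)
  have AM[measurable]: "A \<in> borel_measurable M" by (rule measurable_from_subalg[OF sub Am])
  note [measurable] = e1m e2m
  have i1: "integrable M (\<lambda>x. (norm (e1 x))^2)" and b1: "(\<integral>x. (norm (e1 x))^2 \<partial>M) \<le> S1"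
    using sq_bound[OF P sub e1m S1 v1] by auto
  have i2: "integrable M (\<lambda>x. (norm (e2 x))^2)" and b2: "(\<integral>x. (norm (e2 x))^2 \<partial>M) \<le> S2"
    using sq_bound[OF P sub e2m S2 v2] by auto
  obtain \<omega>0 where "\<omega>0 \<in> space M" using not_empty by blast
  then have B0: "B \<ge> 0" using Ab norm_ge_zero order_trans by blast
  have iA: "integrable M (\<lambda>x. (norm (A x))^2)"
    by (rule integrable_const_bound[where B="B^2"]) (use Ab in \<open>auto intro!: power_mono\<close>)
  have cross0: "integrable M (\<lambda>x. A x \<bullet> e x) \<and> (\<integral>x. A x \<bullet> e x \<partial>M) = 0"
    if em: "e \<in> borel_measurable M" and ie: "integrable M (\<lambda>x. (norm (e x))^2)"
      and me: "\<forall>b\<in>Basis. AE \<omega> in M. real_cond_exp M F (\<lambda>x. e x \<bullet> b) \<omega> = 0" for e :: "'b \<Rightarrow> 'v"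
  proof -
    have ib: "integrable M (\<lambda>x. B * (1 + (norm (e x))^2))" using ie by simp
    have bnd: "\<bar>u\<bar> \<le> B * (1 + (norm (e x))^2)" if "\<bar>u\<bar> \<le> norm (A x) * norm (e x)" "x \<in> space M" for u x
    proof -
      have "norm (e x) \<le> 1 + (norm (e x))^2"
      proof (cases "norm (e x) \<le> 1")
        case True then show ?thesis by (smt (verit) zero_le_power2)
      next
        case False then have "norm (e x) * 1 \<le> norm (e x) * norm (e x)" by (intro mult_left_mono) auto
        then show ?thesis by (simp add: power2_eq_square)
      qed
      then have "norm (A x) * norm (e x) \<le> B * (1 + (norm (e x))^2)"
        using Ab that(2) B0 by (meson mult_mono norm_ge_zero order_trans)
      then show ?thesis using that(1) by linarith
    qed
    have ic: "integrable M (\<lambda>x. (A x \<bullet> b) * (e x \<bullet> b))" if "b \<in> Basis" for b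
    proof (rule Bochner_Integration.integrable_bound[OF ib])
      show "(\<lambda>x. (A x \<bullet> b) * (e x \<bullet> b)) \<in> borel_measurable M" using em by measurable
      show "AE x in M. norm ((A x \<bullet> b) * (e x \<bullet> b)) \<le> norm (B * (1 + (norm (e x))^2))"
      proof (rule AE_I2)
        fix x assume x: "x \<in> space M"
        have "\<bar>A x \<bullet> b\<bar> \<le> norm (A x)" using that by (simp add: Basis_le_norm)
        moreover have "\<bar>e x \<bullet> b\<bar> \<le> norm (e x)" using that by (simp add: Basis_le_norm)
        ultimately have "\<bar>(A x \<bullet> b) * (e x \<bullet> b)\<bar> \<le> norm (A x) * norm (e x)"
          by (simp add: abs_mult mult_mono)
        then have "\<bar>(A x \<bullet> b) * (e x \<bullet> b)\<bar> \<le> B * (1 + (norm (e x))^2)" by (rule bnd[OF _ x])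
        then show "norm ((A x \<bullet> b) * (e x \<bullet> b)) \<le> norm (B * (1 + (norm (e x))^2))" by simp
      qed
    qed
    have z: "(\<integral>x. (A x \<bullet> b) * (e x \<bullet> b) \<partial>M) = 0" if b: "b \<in> Basis" for b
    proof -
      have Abm: "(\<lambda>x. A x \<bullet> b) \<in> borel_measurable F" using Am by measurable
      have "(\<integral>x. (A x \<bullet> b) * (e x \<bullet> b) \<partial>M) = (\<integral>x. (A x \<bullet> b) * real_cond_exp M F (\<lambda>x. e x \<bullet> b) x \<partial>M)"
        by (rule FS.real_cond_exp_intg(2)[symmetric]) (use ic[OF b] Abm em in auto)
      also have "\<dots> = (\<integral>x. 0 \<partial>M)"
        by (rule integral_cong_AE) (use me b Abm in \<open>auto elim!: AE_mp intro!: measurable_from_subalg[OF sub]\<close>)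
      finally show ?thesis by simp
    qed
    have eq: "(\<lambda>x. A x \<bullet> e x) = (\<lambda>x. \<Sum>b\<in>Basis. (A x \<bullet> b) * (e x \<bullet> b))"
      by (rule ext) (rule euclidean_inner)
    have "integrable M (\<lambda>x. \<Sum>b\<in>Basis. (A x \<bullet> b) * (e x \<bullet> b))" by (rule Bochner_Integration.integrable_sum) (use ic in auto)
    moreover have "(\<integral>x. (\<Sum>b\<in>Basis. (A x \<bullet> b) * (e x \<bullet> b)) \<partial>M) = 0"
      using ic z by (simp add: integral_sum)
    ultimately show ?thesis unfolding eq by simp
  qed
  have c1: "integrable M (\<lambda>x. A x \<bullet> e1 x)" "(\<integral>x. A x \<bullet> e1 x \<partial>M) = 0"
    using cross0[OF e1m i1] m1 by auto
  have c2: "integrable M (\<lambda>x. A x \<bullet> e2 x)" "(\<integral>x. A x \<bullet> e2 x \<partial>M) = 0"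
    using cross0[OF e2m i2] m2 by auto
  have i12: "integrable M (\<lambda>x. e1 x \<bullet> e2 x)"
  proof (rule Bochner_Integration.integrable_bound[OF Bochner_Integration.integrable_add[OF i1 i2]])
    show "(\<lambda>x. e1 x \<bullet> e2 x) \<in> borel_measurable M" by measurable
    show "AE x in M. norm (e1 x \<bullet> e2 x) \<le> norm ((norm (e1 x))^2 + (norm (e2 x))^2)"
    proof (rule AE_I2)
      fix x
      have "\<bar>e1 x \<bullet> e2 x\<bar> \<le> norm (e1 x) * norm (e2 x)" by (rule Cauchy_Schwarz_ineq2)
      also have "\<dots> \<le> (norm (e1 x))^2 + (norm (e2 x))^2"
      proof -
        have "0 \<le> (norm (e1 x) - norm (e2 x))^2" by simp
        then have h1: "2 * (norm (e1 x) * norm (e2 x)) \<le> (norm (e1 x))^2 + (norm (e2 x))^2"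
          by (simp add: power2_diff mult.assoc)
        have h2: "0 \<le> norm (e1 x) * norm (e2 x)" by simp
        show ?thesis using h1 h2 by linarith
      qed
      finally show "norm (e1 x \<bullet> e2 x) \<le> norm ((norm (e1 x))^2 + (norm (e2 x))^2)" by simp
    qed
  qed
  have o12: "(\<integral>x. e1 x \<bullet> e2 x \<partial>M) = 0"
  proof -
    have "(\<integral>x. e1 x \<bullet> e2 x \<partial>M) = (\<integral>x. real_cond_exp M F (\<lambda>x. e1 x \<bullet> e2 x) x \<partial>M)"
      by (rule FS.real_cond_exp_int(2)[OF i12, symmetric])
    also have "\<dots> = (\<integral>x. 0 \<partial>M)"
      by (rule integral_cong_AE) (use orth in auto)
    finally show ?thesis by simp
  qed
  have pw: "(norm (A x + c1 *\<^sub>R e1 x - c2 *\<^sub>R e2 x))^2 =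
      (norm (A x))^2 + c1^2 * (norm (e1 x))^2 + c2^2 * (norm (e2 x))^2
      + 2 * c1 * (A x \<bullet> e1 x) - 2 * c2 * (A x \<bullet> e2 x) - 2 * c1 * c2 * (e1 x \<bullet> e2 x)" for x
    unfolding power2_norm_eq_inner
    by (simp add: inner_add_left inner_add_right inner_diff_left inner_diff_right
        inner_commute[of "e1 x" "A x"] inner_commute[of "e2 x" "A x"] inner_commute[of "e2 x" "e1 x"]
        power2_eq_square algebra_simps)
  define T where "T x = (norm (A x))^2 + c1^2 * (norm (e1 x))^2 + c2^2 * (norm (e2 x))^2
      + 2 * c1 * (A x \<bullet> e1 x) - 2 * c2 * (A x \<bullet> e2 x) - 2 * c1 * c2 * (e1 x \<bullet> e2 x)" for x
  have iT: "integrable M T" unfolding T_def using iA i1 i2 c1(1) c2(1) i12 by auto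
  have "(\<integral>x. T x \<partial>M) = (\<integral>x. (norm (A x))^2 \<partial>M) + c1^2 * (\<integral>x. (norm (e1 x))^2 \<partial>M)
      + c2^2 * (\<integral>x. (norm (e2 x))^2 \<partial>M) + 2 * c1 * (\<integral>x. A x \<bullet> e1 x \<partial>M)
      - 2 * c2 * (\<integral>x. A x \<bullet> e2 x \<partial>M) - 2 * c1 * c2 * (\<integral>x. e1 x \<bullet> e2 x \<partial>M)"
    unfolding T_def using iA i1 i2 c1(1) c2(1) i12 by simp
  also have "\<dots> \<le> (\<integral>x. (norm (A x))^2 \<partial>M) + c1^2 * S1 + c2^2 * S2"
    using c1(2) c2(2) o12 b1 b2 by (simp add: mult_left_mono add_mono)
  finally have "(\<integral>x. T x \<partial>M) \<le> (\<integral>x. (norm (A x))^2 \<partial>M) + c1^2 * S1 + c2^2 * S2" .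
  moreover have eqT: "(\<lambda>x. (norm (A x + c1 *\<^sub>R e1 x - c2 *\<^sub>R e2 x))^2) = T"
    by (rule ext) (simp add: pw T_def)
  ultimately show "(\<integral>\<omega>. (norm (A \<omega> + c1 *\<^sub>R e1 \<omega> - c2 *\<^sub>R e2 \<omega>))^2 \<partial>M)
       \<le> (\<integral>\<omega>. (norm (A \<omega>))^2 \<partial>M) + c1^2 * S1 + c2^2 * S2" by simp
  show "integrable M (\<lambda>\<omega>. (norm (A \<omega> + c1 *\<^sub>R e1 \<omega> - c2 *\<^sub>R e2 \<omega>))^2)" using iT eqT by simp
qed

lemma inv_step:
  fixes v v' \<delta> :: real
  assumes v: "v > 0" and vv: "v \<le> v'" and sq: "v'^2 = v^2 + \<delta>" and d: "\<delta> \<ge> 0"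
  shows "1 / v - \<delta> / (2 * v^3) \<le> 1 / v'"
proof -
  have v'0: "v' > 0" using v vv by simp
  have "(v' - v) * (v' + v) = \<delta>" using sq by (simp add: power2_eq_square algebra_simps)
  then have e1: "v' - v = \<delta> / (v' + v)" using v v'0 by (simp add: field_simps)
  have "\<delta> / (v' + v) \<le> \<delta> / (2 * v)" using v vv d by (intro divide_left_mono) auto
  then have h1: "v' - v \<le> \<delta> / (2 * v)" using e1 by simp
  have e2: "1 / v - 1 / v' = (v' - v) / (v * v')" using v v'0 by (simp add: field_simps)
  have "(v' - v) / (v * v') \<le> (v' - v) / (v * v)"
    using v vv by (intro divide_left_mono mult_left_mono mult_pos_pos) auto
  also have "\<dots> \<le> (\<delta> / (2 * v)) / (v * v)" using h1 v by (intro divide_right_mono) auto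
  also have "\<dots> = \<delta> / (2 * v^3)" by (simp add: power3_eq_cube)
  finally show ?thesis using e2 by linarith
qed

lemma rec_bound:
  fixes e u :: "nat \<Rightarrow> real"
  assumes u1: "\<forall>k. u k \<ge> 1" and ustep: "\<forall>k. (u (Suc k))^4 = (u k)^4 + \<delta>" and d: "\<delta> > 0"
    and a: "a \<ge> 5 / 8 * \<delta>" and c0: "c \<ge> 0"
    and small: "\<forall>k\<ge>k0. a / (u k)^4 \<le> 1"
    and rec: "\<forall>k\<ge>k0. e (Suc k) \<le> (1 - a / (u k)^4) * e k + c / (u k)^6"
  shows "\<exists>K. \<forall>k\<ge>k0. e k \<le> K / (u k)^2"
proof -
  define K where "K = max (e k0 * (u k0)^2) (8 * c / \<delta>)"
  have K1: "K \<ge> 8 * c / \<delta>" by (simp add: K_def)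
  have K0: "K \<ge> 0" using K1 c0 d by (smt (verit) divide_nonneg_pos)
  have cK: "c \<le> K * (a - \<delta> / 2)"
  proof -
    have "c \<le> K * (\<delta> / 8)" using K1 d by (simp add: field_simps)
    also have "\<dots> \<le> K * (a - \<delta> / 2)" using K0 a by (intro mult_left_mono) auto
    finally show ?thesis .
  qed
  have "e k \<le> K / (u k)^2" if "k \<ge> k0" for k
    using that
  proof (induction k rule: dec_induct)
    case base
    have "u k0 > 0" using u1 by (smt (verit))
    then show ?case by (simp add: K_def field_simps)
  next
    case (step k)
    define v where "v = (u k)^2"
    define v' where "v' = (u (Suc k))^2"
    have uk: "u k \<ge> 1" using u1 by simp
    have v1: "v \<ge> 1" using uk by (simp add: v_def one_le_power)
    have v0: "v > 0" using v1 by simp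
    have vsq: "v'^2 = v^2 + \<delta>" using ustep by (simp add: v_def v'_def flip: power_mult)
    have vv: "v \<le> v'"
    proof -
      have "v^2 \<le> v'^2" using vsq d by simp
      moreover have "v' \<ge> 0" by (simp add: v'_def)
      ultimately show ?thesis using v0 by (meson power2_le_imp_le)
    qed
    have u4: "(u k)^4 = v^2" by (simp add: v_def flip: power_mult)
    have u6: "(u k)^6 = v^3" by (simp add: v_def flip: power_mult)
    have "a / (u k)^4 \<le> 1" using small step.hyps by simp
    then have coef: "1 - a / v^2 \<ge> 0" using u4 by simp
    have "e (Suc k) \<le> (1 - a / (u k)^4) * e k + c / (u k)^6" using rec step.hyps by simp
    then have "e (Suc k) \<le> (1 - a / v^2) * e k + c / v^3" unfolding u4 u6 .
    also have "\<dots> \<le> (1 - a / v^2) * (K / v) + c / v^3"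
    proof -
      have "e k \<le> K / v" using step.IH by (simp add: v_def)
      then show ?thesis using coef by (intro add_right_mono mult_left_mono)
    qed
    also have "\<dots> = K / v - (K * a - c) / v^3"
      using v0 by (simp add: field_simps power2_eq_square power3_eq_cube)
    also have "\<dots> \<le> K / v - (K * (\<delta> / 2)) / v^3"
    proof -
      have "K * (\<delta> / 2) \<le> K * a - c" using cK by (simp add: algebra_simps)
      then have "(K * (\<delta> / 2)) / v^3 \<le> (K * a - c) / v^3" using v0 by (intro divide_right_mono) auto
      then show ?thesis by linarith
    qed
    also have "\<dots> = K * (1 / v - \<delta> / (2 * v^3))" by (simp add: field_simps)
    also have "\<dots> \<le> K * (1 / v')"
      using inv_step[OF v0 vv vsq] d K0 by (intro mult_left_mono) auto
    finally show ?case by (simp add: v'_def)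
  qed
  then show ?thesis by blast
qed

lemma u_facts:
  fixes \<delta> :: real assumes d: "\<delta> > 0"
  shows "((1 + \<delta> * real k) powr (1/4))^4 = 1 + \<delta> * real k"
    and "(1 + \<delta> * real k) powr (1/4) \<ge> 1"
    and "(1 + \<delta> * real k) powr (- 3 / 4) = 1 / ((1 + \<delta> * real k) powr (1/4))^3"
proof -
  define s where "s = 1 + \<delta> * real k"
  have s1: "s \<ge> 1" using d by (simp add: s_def)
  then have s0: "s > 0" by simp
  have p: "(s powr (1/4))^n = s powr (real n / 4)" for n
    using s0 by (simp add: powr_realpow[symmetric] powr_powr)
  show "((1 + \<delta> * real k) powr (1/4))^4 = 1 + \<delta> * real k"
    using p[of 4] s0 by (simp add: s_def[symmetric])
  show "(1 + \<delta> * real k) powr (1/4) \<ge> 1" using s1 by (simp add: s_def[symmetric] ge_one_powr_ge_zero)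
  have "s powr (- 3 / 4) = inverse (s powr (3/4))" using powr_minus[of s "3/4"] by simp
  also have "\<dots> = 1 / (s powr (1/4))^3" using p[of 3] by (simp add: inverse_eq_divide)
  finally show "(1 + \<delta> * real k) powr (- 3 / 4) = 1 / ((1 + \<delta> * real k) powr (1/4))^3"
    by (simp add: s_def)
qed

lemma grad_sum_zero:
  fixes f :: "'n::finite \<Rightarrow> 'a::real_inner \<Rightarrow> real"
  assumes gd: "\<forall>i z. GDERIV (f i) z :> grad i z"
    and mn: "\<forall>w. (\<Sum>i\<in>UNIV. f i wstar) / real CARD('n) \<le> (\<Sum>i\<in>UNIV. f i w) / real CARD('n)"
  shows "(\<Sum>i\<in>UNIV. grad i wstar) = 0"
proof -
  define S where "S = (\<Sum>i\<in>UNIV. grad i wstar)"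
  have der: "((\<lambda>w. \<Sum>i\<in>UNIV. f i w) has_derivative (\<lambda>h. \<Sum>i\<in>UNIV. h \<bullet> grad i wstar)) (at wstar)"
    using gd unfolding gderiv_def by (intro has_derivative_sum) auto
  have mn2: "(\<Sum>i\<in>UNIV. f i wstar) \<le> (\<Sum>i\<in>UNIV. f i w)" for w
    using mn[rule_format, of w] by (simp add: divide_right_mono_neg divide_le_cancel)
  have "(\<lambda>h. \<Sum>i\<in>UNIV. h \<bullet> grad i wstar) = (\<lambda>h. 0)"
    by (rule has_derivative_local_min[OF der]) (use mn2 in auto)
  then have "(\<Sum>i\<in>UNIV. S \<bullet> grad i wstar) = 0" by metis
  then have "S \<bullet> S = 0" by (simp add: S_def inner_sum_right)
  then show ?thesis by (simp add: S_def)
qed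

lemma prodset_closed: "closed S \<Longrightarrow> closed (prodset S :: ('a::real_normed_vector^'n::finite) set)"
proof -
  assume cS: "closed S"
  have "prodset S = (\<Inter>i\<in>UNIV. UNIV \<inter> (\<lambda>W::'a^'n. W $ i) -` S)" by (auto simp: prodset_def)
  moreover have "closed (UNIV \<inter> (\<lambda>W::'a^'n. W $ i) -` S)" for i
    by (rule continuous_closed_preimage) (auto intro: continuous_on_component cS continuous_on_id)
  ultimately show ?thesis by auto
qed

lemma prodset_convex: "convex S \<Longrightarrow> convex (prodset S :: ('a::real_normed_vector^'n::finite) set)"
  unfolding convex_def prodset_def by auto

lemma prodset_vec: "w \<in> S \<Longrightarrow> (vec w :: 'a^'n::finite) \<in> prodset S"
  by (simp add: prodset_def vec_def)

lemma prodset_ball: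
  assumes "cball w r \<subseteq> S" "norm (W - vec w) \<le> r"
  shows "(W :: 'a::real_normed_vector^'n::finite) \<in> prodset S"
proof -
  have "norm (W $ i - w) \<le> r" for i
    using Finite_Cartesian_Product.norm_nth_le[of "W - vec w" i] assms(2) by (simp add: vec_def)
  then show ?thesis using assms(1) by (auto simp: prodset_def dist_norm norm_minus_commute)
qed

lemma prodset_bound:
  assumes "\<forall>x\<in>S. norm (x - w) \<le> R"
  shows "\<forall>W\<in>prodset S. (norm (W - (vec w :: 'a::real_inner^'n::finite)))^2 \<le> real CARD('n) * R^2"
proof
  fix W :: "'a^'n" assume W: "W \<in> prodset S"
  have "(norm (W - vec w))^2 = (\<Sum>i\<in>UNIV. (norm (W $ i - w))^2)" by (simp add: norm_vec_sq vec_def)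
  also have "\<dots> \<le> (\<Sum>i\<in>(UNIV::'n set). R^2)"
    using W assms by (intro sum_mono power_mono) (auto simp: prodset_def)
  finally show "(norm (W - vec w))^2 \<le> real CARD('n) * R^2" by simp
qed

lemma young_sq:
  fixes a b :: "'v::real_inner"
  assumes c: "c > 0"
  shows "(norm (a + b))^2 \<le> (1 + c) * (norm a)^2 + (1 + 1 / c) * (norm b)^2"
proof -
  have "2 * (a \<bullet> b) \<le> 2 * (norm a * norm b)" using Cauchy_Schwarz_ineq2[of a b] by simp
  also have "2 * (norm a * norm b) \<le> c * (norm a)^2 + (1 / c) * (norm b)^2"
  proof -
    have "0 \<le> (c * norm a - norm b)^2" by simp
    then have "2 * c * (norm a * norm b) \<le> c^2 * (norm a)^2 + (norm b)^2"
      by (simp add: power2_diff power_mult_distrib algebra_simps)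
    then have "(2 * (norm a * norm b)) * c \<le> (c * (norm a)^2 + (1 / c) * (norm b)^2) * c"
      using c by (simp add: algebra_simps power2_eq_square)
    then show ?thesis using c by (simp add: mult_le_cancel_right_pos)
  qed
  finally have "2 * (a \<bullet> b) \<le> c * (norm a)^2 + (1 / c) * (norm b)^2" .
  moreover have "(norm (a + b))^2 = (norm a)^2 + 2 * (a \<bullet> b) + (norm b)^2"
    unfolding power2_norm_eq_inner by (simp add: inner_add_left inner_add_right inner_commute[of b a])
  ultimately show ?thesis by (simp add: algebra_simps)
qed

lemma num_step:
  fixes x e e' G D :: real
  assumes x0: "x > 0" and x1: "x \<le> 1" and e0: "e \<ge> 0" and G0: "G \<ge> 0" and D0: "D \<ge> 0"
    and h: "e' \<le> (1 + x / 2) * ((1 - x) * e + G) + (1 + 1 / (x / 2)) * D"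
  shows "e' \<le> (1 - x / 2) * e + 2 * G + 3 * D / x"
proof -
  have a: "(1 + x / 2) * (1 - x) * e \<le> (1 - x / 2) * e"
  proof -
    have "(1 + x / 2) * (1 - x) \<le> 1 - x / 2" using x0 by (simp add: algebra_simps)
    then show ?thesis using e0 by (simp add: mult_right_mono)
  qed
  have b: "(1 + x / 2) * G \<le> 2 * G" using x1 G0 by (simp add: mult_right_mono)
  have c: "(1 + 1 / (x / 2)) * D \<le> 3 * D / x"
  proof -
    have "1 + 1 / (x / 2) \<le> 3 / x" using x0 x1 by (simp add: field_simps)
    then show ?thesis using D0 by (metis mult_right_mono times_divide_eq_left)
  qed
  have "(1 + x / 2) * ((1 - x) * e + G) = (1 + x / 2) * (1 - x) * e + (1 + x / 2) * G"
    by (metis distrib_left mult.assoc)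
  then show ?thesis using h a b c by linarith
qed

theorem mainTheorem3:
  fixes f :: "'n::finite \<Rightarrow> 'a::euclidean_space \<Rightarrow> real"
    and grad :: "'n \<Rightarrow> 'a \<Rightarrow> 'a"
    and \<mu> Lc :: real
    and wstar :: 'a and Wset :: "'a set" and \<zeta> nablastar :: real
    and Lm :: "real^'n^'n" and \<rho> :: "nat \<Rightarrow> real"
    and \<gamma>0 \<eta>0 \<delta> :: real and \<gamma> \<eta> :: "nat \<Rightarrow> real"
    and gradG :: "nat \<Rightarrow> 'a^'n \<Rightarrow> 'a^'n"
    and M :: "'b measure" and Fk :: "nat \<Rightarrow> 'b measure" and \<kappa> :: nat
    and \<epsilon>1 \<epsilon>2 :: "nat \<Rightarrow> 'b \<Rightarrow> 'a^'n" and \<Sigma>1 \<Sigma>2 :: real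
    and Wseq :: "nat \<Rightarrow> 'b \<Rightarrow> 'a^'n"
  assumes N2: "CARD('n) \<ge> 2"
    and mu_pos: "0 < \<mu>" and mu_le_L: "\<mu> \<le> Lc"
    and sconv: "\<forall>i. strongly_convex \<mu> (f i)"
    and smooth: "\<forall>i. smooth_with_grad Lc (f i) (grad i)"
    and minimizer: "\<forall>w. (\<Sum>i\<in>UNIV. f i wstar) / real CARD('n) \<le> (\<Sum>i\<in>UNIV. f i w) / real CARD('n)"
    and Wset_ne: "Wset \<noteq> {}" and Wset_closed: "closed Wset" and Wset_convex: "convex Wset"
    and Wset_bounded: "bounded Wset" and wstar_int: "wstar \<in> interior Wset"
    and zeta_def: "\<zeta> = (INF w\<in>frontier Wset. norm (w - wstar))"
    and nablastar_def: "nablastar = Max (range (\<lambda>i. norm (grad i wstar)))"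
    and lap: "laplacian_matrix Lm"
    and eig: "ordered_eigenvalues Lm \<rho>"
    and rho2_pos: "\<rho> 2 > 0"
    and gamma0_pos: "\<gamma>0 > 0" and eta0_pos: "\<eta>0 > 0"
    and delta_pos: "0 < \<delta>" and delta_le: "\<delta> \<le> 4 / 5 * \<mu> * \<eta>0"
    and gamma_def: "\<forall>k. \<gamma> k = \<gamma>0 * (1 + \<delta> * real k) powr (- 3 / 4)"
    and eta_def: "\<forall>k. \<eta> k = \<eta>0 / (1 + \<delta> * real k)"
    and kappa1: "\<forall>k\<ge>\<kappa>. \<eta> k * (\<mu> + Lc) + \<gamma> k * \<rho> CARD('n) \<le> 2"
    and kappa2: "\<forall>k\<ge>\<kappa>. \<eta> k * (sqrt (real CARD('n)) * nablastar * Lc) \<le> \<gamma> k * (\<zeta> * \<mu> * \<rho> 2)"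
    and gradG: "\<forall>k W. GDERIV (Gfun f Lm (\<gamma> k) (\<eta> k)) W :> gradG k W"
    and prob: "prob_space M"
    and filt: "filtration (space M) Fk"
    and subalg: "\<forall>k. subalgebra M (Fk k)"
    and W0_meas: "Wseq \<kappa> \<in> borel_measurable (Fk \<kappa>)"
    and W0_in: "\<forall>\<omega>\<in>space M. Wseq \<kappa> \<omega> \<in> prodset Wset"
    and iter: "\<forall>k\<ge>\<kappa>. \<forall>\<omega>\<in>space M. Wseq (Suc k) \<omega> =
        closest_point (prodset Wset)
          (Wseq k \<omega> - \<eta> k *\<^sub>R gradG k (Wseq k \<omega>) + \<gamma> k *\<^sub>R \<epsilon>1 k \<omega> - \<eta> k *\<^sub>R \<epsilon>2 k \<omega>)"
    and eps1_meas: "\<forall>k\<ge>\<kappa>. \<epsilon>1 k \<in> borel_measurable (Fk (Suc k))"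
    and eps2_meas: "\<forall>k\<ge>\<kappa>. \<epsilon>2 k \<in> borel_measurable (Fk (Suc k))"
    and eps1_mean: "\<forall>k\<ge>\<kappa>. \<forall>b\<in>Basis. AE \<omega> in M. real_cond_exp M (Fk k) (\<lambda>x. \<epsilon>1 k x \<bullet> b) \<omega> = 0"
    and eps2_mean: "\<forall>k\<ge>\<kappa>. \<forall>b\<in>Basis. AE \<omega> in M. real_cond_exp M (Fk k) (\<lambda>x. \<epsilon>2 k x \<bullet> b) \<omega> = 0"
    and eps_orth: "\<forall>k\<ge>\<kappa>. AE \<omega> in M. real_cond_exp M (Fk k) (\<lambda>x. \<epsilon>1 k x \<bullet> \<epsilon>2 k x) \<omega> = 0"
    and Sigma1_nn: "\<Sigma>1 \<ge> 0" and Sigma2_nn: "\<Sigma>2 \<ge> 0"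
    and eps1_var: "\<forall>k\<ge>\<kappa>. AE \<omega> in M.
        nn_cond_exp M (Fk k) (\<lambda>x. ennreal ((norm (\<epsilon>1 k x))\<^sup>2)) \<omega> \<le> ennreal (real CARD('n) * \<Sigma>1)"
    and eps2_var: "\<forall>k\<ge>\<kappa>. AE \<omega> in M.
        nn_cond_exp M (Fk k) (\<lambda>x. ennreal ((norm (\<epsilon>2 k x))\<^sup>2)) \<omega> \<le> ennreal (real CARD('n) * \<Sigma>2)"
  shows "\<exists>C::real. \<forall>k\<ge>\<kappa>.
    (\<integral>\<omega>. (1 / real CARD('n)) * (\<Sum>i\<in>UNIV. (norm (Wseq k \<omega> $ i - wstar))\<^sup>2) \<partial>M)
      \<le> C / sqrt (real k + 1)"
proof -
  define N where "N = real CARD('n)"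
  have N0: "N > 0" using N2 by (simp add: N_def)
  have gd: "\<forall>i z. GDERIV (f i) z :> grad i z" using smooth unfolding smooth_with_grad_def by auto
  have lipg: "\<forall>i. Lc-lipschitz_on UNIV (grad i)" using smooth unfolding smooth_with_grad_def by auto
  define Ph where "Ph = Phi grad"
  obtain K where Kpos: "K > 0" and LK: "\<And>W::'a^'n. norm (Lhat Lm W) \<le> K * norm W"
    using Lhat_bounded by blast
  have monoP: "\<And>X Y. \<mu> * (norm (X - Y))^2 \<le> (Ph X - Ph Y) \<bullet> (X - Y)"
    unfolding Ph_def by (rule Phi_monotone[OF sconv gd])
  have lipP: "\<And>X Y. norm (Ph X - Ph Y) \<le> Lc * norm (X - Y)"
    unfolding Ph_def by (rule Phi_lipschitz[OF lipg])
  interpret D: detset Ph Lm \<rho> \<mu> Lc K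
    by unfold_locales (use monoP lipP lap eig rho2_pos N2 Kpos LK mu_pos mu_le_L in auto)
  define u where "u k = (1 + \<delta> * real k) powr (1/4)" for k
  have u4: "(u k)^4 = 1 + \<delta> * real k" for k using u_facts(1)[OF delta_pos] by (simp add: u_def)
  have u1: "u k \<ge> 1" for k using u_facts(2)[OF delta_pos] by (simp add: u_def)
  have u0: "u k > 0" for k using u1[of k] by simp
  have eta_u: "\<eta> k = \<eta>0 / (u k)^4" for k using eta_def u4 by simp
  have gam_u: "\<gamma> k = \<gamma>0 / (u k)^3" for k using gamma_def u_facts(3)[OF delta_pos] by (simp add: u_def)
  have ustep: "(u (Suc k))^4 = (u k)^4 + \<delta>" for k by (simp add: u4 algebra_simps)
  have umono: "u k \<le> u k'" if "k \<le> k'" for k k'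
  proof -
    have "(u k)^4 \<le> (u k')^4" using that delta_pos by (simp add: u4 mult_left_mono)
    then show ?thesis using power_mono_iff[of "u k" "u k'" 4] u0[of k] u0[of k'] by simp
  qed
  have ustep2: "u (Suc k) - u k \<le> \<delta> / (u k)^3" for k
  proof -
    define x where "x = u k" define y where "y = u (Suc k)"
    have xy: "x \<le> y" using umono[of k "Suc k"] by (simp add: x_def y_def)
    have x0: "x > 0" using u0 by (simp add: x_def)
    have "(y - x) * (y^3 + y^2 * x + y * x^2 + x^3) = y^4 - x^4" by (simp add: algebra_simps power2_eq_square power3_eq_cube power4_eq_xxxx)
    also have "\<dots> = \<delta>" using ustep[of k] by (simp add: x_def y_def)
    finally have e: "(y - x) * (y^3 + y^2 * x + y * x^2 + x^3) = \<delta>" .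
    have "x^3 \<le> y^3 + y^2 * x + y * x^2 + x^3" using xy x0 by (simp add: add_nonneg_nonneg)
    then have "(y - x) * x^3 \<le> \<delta>" using e xy by (metis diff_ge_0_iff_ge mult_left_mono)
    then show ?thesis using x0 by (simp add: x_def y_def field_simps)
  qed
  define b0 where "b0 = \<gamma>0 / \<eta>0"
  have b0pos: "b0 > 0" using gamma0_pos eta0_pos by (simp add: b0_def)
  define \<beta> where "\<beta> k = \<gamma> k / \<eta> k" for k
  have beta_u: "\<beta> k = b0 * u k" for k
    using u0[of k] eta0_pos by (simp add: \<beta>_def eta_u gam_u b0_def field_simps power3_eq_cube power4_eq_xxxx)
  have beta_pos: "\<beta> k > 0" for k using beta_u b0pos u0 by simp
  have beta_ge: "\<beta> k \<ge> b0" for k using beta_u b0pos u1[of k] by simp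
  have gG: "gradG k W = Ph W + \<beta> k *\<^sub>R Lhat Lm W" for k W
    using gradG_eq[OF lap gd gradG[rule_format, of k W]] by (simp add: Ph_def \<beta>_def)
  have "\<forall>k. \<exists>W. Ph W + \<beta> k *\<^sub>R Lhat Lm W = 0"
    using D.fixpoint_exists beta_pos less_imp_le by blast
  then obtain Z where Z: "\<And>k. Ph (Z k) + \<beta> k *\<^sub>R Lhat Lm (Z k) = 0" by metis
  have gZ: "gradG k (Z k) = 0" for k using Z gG by simp
  define g where "g = Ph (vec wstar)"
  have sg: "(\<Sum>i\<in>UNIV. g $ i) = 0"
    using grad_sum_zero[OF gd minimizer] by (simp add: g_def Ph_def Phi_def vec_def)
  have sPZ: "(\<Sum>i\<in>UNIV. Ph (Z k) $ i) = 0" for k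
  proof -
    have "Ph (Z k) = - (\<beta> k *\<^sub>R Lhat Lm (Z k))" using Z[of k] by (simp add: eq_neg_iff_add_eq_0)
    then show ?thesis by (simp add: sum_negf scaleR_sum_right[symmetric] Lhat_sum0[OF lap])
  qed
  define c1 where "c1 = (1 + Lc / \<mu>) * norm g / \<rho> 2"
  have c1nn: "c1 \<ge> 0" using mu_pos mu_le_L rho2_pos by (simp add: c1_def)
  have Zb: "norm (Z k - vec wstar) \<le> c1 / \<beta> k" for k
  proof -
    have s: "(\<Sum>i\<in>UNIV. (Ph (Z k) - Ph (vec wstar)) $ i) = 0"
      using sPZ[of k] sg by (simp add: sum_subtractf g_def)
    have r: "Ph (Z k) - Ph (vec wstar) + \<beta> k *\<^sub>R Lhat Lm (Z k - vec wstar) = - g"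
      using Z[of k] by (simp add: Lhat_diff Lhat_const[OF lap] g_def algebra_simps)
    have sr: "(\<Sum>i\<in>UNIV. (- g) $ i) = 0" using sg by (simp add: sum_negf)
    have "norm (Z k - vec wstar) \<le> (1 + Lc / \<mu>) * (norm (- g) / (\<beta> k * \<rho> 2))"
      by (rule D.key[OF beta_pos s r sr])
    then show ?thesis by (simp add: c1_def field_simps)
  qed
  define BP where "BP = norm g + Lc * c1 / b0"
  have PZb: "norm (Ph (Z k)) \<le> BP" for k
  proof -
    have "norm (Ph (Z k)) \<le> norm g + norm (Ph (Z k) - g)" by (metis norm_triangle_sub add.commute)
    also have "norm (Ph (Z k) - g) \<le> Lc * norm (Z k - vec wstar)" unfolding g_def by (rule lipP)
    also have "Lc * norm (Z k - vec wstar) \<le> Lc * (c1 / \<beta> k)"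
      using Zb mu_pos mu_le_L by (intro mult_left_mono) auto
    also have "c1 / \<beta> k \<le> c1 / b0" using c1nn b0pos beta_ge[of k] beta_pos[of k] by (intro divide_left_mono) auto
    finally show ?thesis using mu_pos mu_le_L by (simp add: BP_def mult_left_mono)
  qed
  define c2 where "c2 = (1 + Lc / \<mu>) * (\<delta> * BP / (b0 * \<rho> 2))"
  have drift: "norm (Z (Suc k) - Z k) \<le> c2 / (u k)^5" for k
  proof -
    define R where "R = ((\<beta> (Suc k) - \<beta> k) / \<beta> k) *\<^sub>R Ph (Z k)"
    have s: "(\<Sum>i\<in>UNIV. (Ph (Z (Suc k)) - Ph (Z k)) $ i) = 0"
      using sPZ[of k] sPZ[of "Suc k"] by (simp add: sum_subtractf)
    have LZ: "Lhat Lm (Z k) = - (1 / \<beta> k) *\<^sub>R Ph (Z k)"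
    proof -
      have "\<beta> k *\<^sub>R Lhat Lm (Z k) = - Ph (Z k)" using Z[of k] by (simp add: eq_neg_iff_add_eq_0 add.commute)
      moreover have "Lhat Lm (Z k) = (1 / \<beta> k) *\<^sub>R (\<beta> k *\<^sub>R Lhat Lm (Z k))"
        using beta_pos[of k] by simp
      ultimately show ?thesis by simp
    qed
    have r: "Ph (Z (Suc k)) - Ph (Z k) + \<beta> (Suc k) *\<^sub>R Lhat Lm (Z (Suc k) - Z k) = R"
    proof -
      have "Ph (Z (Suc k)) - Ph (Z k) + \<beta> (Suc k) *\<^sub>R Lhat Lm (Z (Suc k) - Z k)
          = (Ph (Z (Suc k)) + \<beta> (Suc k) *\<^sub>R Lhat Lm (Z (Suc k))) - Ph (Z k) - \<beta> (Suc k) *\<^sub>R Lhat Lm (Z k)"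
        by (simp add: Lhat_diff scaleR_diff_right algebra_simps)
      also have "\<dots> = - Ph (Z k) + (\<beta> (Suc k) / \<beta> k) *\<^sub>R Ph (Z k)"
        using Z[of "Suc k"] by (simp add: LZ)
      also have "\<dots> = R" using beta_pos[of k] by (simp add: R_def diff_divide_distrib scaleR_diff_left)
      finally show ?thesis .
    qed
    have sr: "(\<Sum>i\<in>UNIV. R $ i) = 0" using sPZ[of k] by (simp add: R_def scaleR_sum_right[symmetric])
    have k1: "norm (Z (Suc k) - Z k) \<le> (1 + Lc / \<mu>) * (norm R / (\<beta> (Suc k) * \<rho> 2))"
      by (rule D.key[OF beta_pos s r sr])
    have k2: "norm R / (\<beta> (Suc k) * \<rho> 2) \<le> \<delta> * BP / (b0 * \<rho> 2) / (u k)^5"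
    proof -
      have bd: "\<beta> (Suc k) - \<beta> k \<le> b0 * (\<delta> / (u k)^3)"
      proof -
        have "b0 * (u (Suc k) - u k) \<le> b0 * (\<delta> / (u k)^3)" using ustep2[of k] b0pos by (intro mult_left_mono) auto
        then show ?thesis by (simp add: beta_u right_diff_distrib)
      qed
      have bd0: "\<beta> (Suc k) - \<beta> k \<ge> 0" using umono[of k "Suc k"] b0pos by (simp add: beta_u mult_left_mono)
      have "norm R = (\<beta> (Suc k) - \<beta> k) / \<beta> k * norm (Ph (Z k))"
        using bd0 beta_pos[of k] by (simp add: R_def)
      also have "\<dots> \<le> (\<delta> / (u k)^4) * BP"
      proof (rule mult_mono)
        have "(\<beta> (Suc k) - \<beta> k) / \<beta> k \<le> (b0 * (\<delta> / (u k)^3)) / \<beta> k"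
          using bd beta_pos[of k] by (intro divide_right_mono) auto
        also have "(b0 * (\<delta> / (u k)^3)) / \<beta> k = \<delta> / (u k)^4"
          using b0pos u0[of k] by (simp add: beta_u field_simps power3_eq_cube power4_eq_xxxx)
        finally show "(\<beta> (Suc k) - \<beta> k) / \<beta> k \<le> \<delta> / (u k)^4" .
        show "norm (Ph (Z k)) \<le> BP" by (rule PZb)
        show "0 \<le> \<delta> / (u k)^4" using delta_pos u0[of k] by simp
        show "0 \<le> norm (Ph (Z k))" by simp
      qed
      also have "\<dots> = \<delta> * BP / (u k)^4" by simp
      finally have nR: "norm R \<le> \<delta> * BP / (u k)^4" .
      have "norm R / (\<beta> (Suc k) * \<rho> 2) \<le> (\<delta> * BP / (u k)^4) / (b0 * u k * \<rho> 2)"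
      proof (rule frac_le)
        show "0 \<le> \<delta> * BP / (u k)^4" using delta_pos PZb[of k] by (smt (verit) norm_ge_zero divide_nonneg_pos mult_nonneg_nonneg zero_less_power u0)
        show "0 < b0 * u k * \<rho> 2" using b0pos u0[of k] rho2_pos by simp
        show "b0 * u k * \<rho> 2 \<le> \<beta> (Suc k) * \<rho> 2"
          using umono[of k "Suc k"] b0pos rho2_pos by (simp add: beta_u)
      qed (rule nR)
      also have "\<dots> = \<delta> * BP / (b0 * \<rho> 2) / (u k)^5"
      proof -
        have u5: "(u k)^5 = (u k)^4 * u k" using power_add[of "u k" 4 1] by simp
        show ?thesis using b0pos u0[of k] rho2_pos by (simp add: u5 field_simps)
      qed
      finally show ?thesis .
    qed
    have "(1 + Lc / \<mu>) * (norm R / (\<beta> (Suc k) * \<rho> 2)) \<le> (1 + Lc / \<mu>) * (\<delta> * BP / (b0 * \<rho> 2) / (u k)^5)"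
      using k2 mu_pos mu_le_L by (intro mult_left_mono) auto
    moreover have "c2 / (u k)^5 = (1 + Lc / \<mu>) * (\<delta> * BP / (b0 * \<rho> 2) / (u k)^5)" by (simp add: c2_def)
    ultimately show ?thesis using k1 by linarith
  qed
  define P where "P = (prodset Wset :: ('a^'n) set)"
  have Pcl: "closed P" using prodset_closed[OF Wset_closed] by (simp add: P_def)
  have Pcv: "convex P" using prodset_convex[OF Wset_convex] by (simp add: P_def)
  have wsW: "wstar \<in> Wset" using wstar_int interior_subset by blast
  have Pne: "P \<noteq> {}" using prodset_vec[OF wsW] by (auto simp: P_def)
  obtain r where r0: "r > 0" and rball: "cball wstar r \<subseteq> Wset"
    using wstar_int mem_interior_cball by blast
  obtain R where Rb: "\<forall>x\<in>Wset. norm (x - wstar) \<le> R"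
    using Wset_bounded unfolding bounded_any_center[of Wset wstar] by (auto simp: dist_norm norm_minus_commute)
  have R0: "R \<ge> 0" using Rb wsW by force
  have PB: "(norm (W - vec wstar))^2 \<le> N * R^2" if "W \<in> P" for W
    using prodset_bound[OF Rb, where 'n='n] that by (simp add: P_def N_def)
  have PBn: "norm (W - vec wstar) \<le> sqrt (N * R^2)" if "W \<in> P" for W
    using PB[OF that] by (simp add: real_le_rsqrt)
  define Bx where "Bx = sqrt (N * R^2) + c1 / b0"
  have PZ: "norm (W - Z j) \<le> Bx" if "W \<in> P" for W j
  proof -
    have "norm (W - Z j) \<le> norm (W - vec wstar) + norm (Z j - vec wstar)"
      using norm_triangle_ineq4[of "W - vec wstar" "Z j - vec wstar"] by simp
    also have "\<dots> \<le> sqrt (N * R^2) + c1 / b0"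
    proof (rule add_mono)
      show "norm (W - vec wstar) \<le> sqrt (N * R^2)" by (rule PBn[OF that])
      have "c1 / \<beta> j \<le> c1 / b0" using c1nn b0pos beta_ge[of j] beta_pos[of j] by (intro divide_left_mono) auto
      then show "norm (Z j - vec wstar) \<le> c1 / b0" using Zb[of j] by linarith
    qed
    finally show ?thesis by (simp add: Bx_def)
  qed
  have inP: "Wseq k \<omega> \<in> P" if "\<kappa> \<le> k" "\<omega> \<in> space M" for k \<omega>
    using that(1)
  proof (induction k rule: dec_induct)
    case base then show ?case using W0_in that(2) by (simp add: P_def)
  next
    case (step k) then show ?case using iter that(2) closest_point_in_set[OF Pcl Pne] by (simp add: P_def)
  qed
  have contL: "continuous_on UNIV (Lhat Lm :: 'a^'n \<Rightarrow> 'a^'n)"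
    by (rule linear_continuous_on) (metis Lhat_linear linear_conv_bounded_linear)
  have contG: "continuous_on UNIV (gradG k)" for k
  proof -
    have "gradG k = (\<lambda>W. Ph W + \<beta> k *\<^sub>R Lhat Lm W)" using gG by auto
    moreover have "continuous_on UNIV (\<lambda>W. Ph W + \<beta> k *\<^sub>R Lhat Lm W)"
      using Phi_continuous[OF lipg] contL unfolding Ph_def by (intro continuous_intros) auto
    ultimately show ?thesis by simp
  qed
  have contCP: "continuous_on UNIV (closest_point P)" by (rule continuous_on_closest_point[OF Pcv Pcl Pne])
  have sub_step: "subalgebra (Fk (Suc k)) (Fk k)" for k
    using filt unfolding subalgebra_def filtration_def by auto
  have sp: "space (Fk k) = space M" for k using subalg unfolding subalgebra_def by auto
  have meas: "Wseq k \<in> borel_measurable (Fk k)" if "\<kappa> \<le> k" for k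
    using that
  proof (induction k rule: dec_induct)
    case base show ?case by (rule W0_meas)
  next
    case (step k)
    have Xm: "Wseq k \<in> borel_measurable (Fk (Suc k))" by (rule measurable_from_subalg[OF sub_step step.IH])
    have Gm: "(\<lambda>\<omega>. gradG k (Wseq k \<omega>)) \<in> borel_measurable (Fk (Suc k))"
      by (rule borel_measurable_continuous_on[OF contG Xm])
    have e1m: "\<epsilon>1 k \<in> borel_measurable (Fk (Suc k))" using eps1_meas step.hyps by auto
    have e2m: "\<epsilon>2 k \<in> borel_measurable (Fk (Suc k))" using eps2_meas step.hyps by auto
    note [measurable] = Xm Gm e1m e2m
    have "(\<lambda>\<omega>. Wseq k \<omega> - \<eta> k *\<^sub>R gradG k (Wseq k \<omega>) + \<gamma> k *\<^sub>R \<epsilon>1 k \<omega> - \<eta> k *\<^sub>R \<epsilon>2 k \<omega>) \<in> borel_measurable (Fk (Suc k))"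
      by measurable
    then have m1: "(\<lambda>\<omega>. closest_point P (Wseq k \<omega> - \<eta> k *\<^sub>R gradG k (Wseq k \<omega>) + \<gamma> k *\<^sub>R \<epsilon>1 k \<omega> - \<eta> k *\<^sub>R \<epsilon>2 k \<omega>)) \<in> borel_measurable (Fk (Suc k))"
      by (rule borel_measurable_continuous_on[OF contCP])
    have eq: "\<And>\<omega>. \<omega> \<in> space (Fk (Suc k)) \<Longrightarrow> Wseq (Suc k) \<omega> = closest_point P (Wseq k \<omega> - \<eta> k *\<^sub>R gradG k (Wseq k \<omega>) + \<gamma> k *\<^sub>R \<epsilon>1 k \<omega> - \<eta> k *\<^sub>R \<epsilon>2 k \<omega>)"
      using iter step.hyps sp by (auto simp: P_def)
    show ?case using m1 measurable_cong[where M="Fk (Suc k)" and f="Wseq (Suc k)"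
      and g="\<lambda>\<omega>. closest_point P (Wseq k \<omega> - \<eta> k *\<^sub>R gradG k (Wseq k \<omega>) + \<gamma> k *\<^sub>R \<epsilon>1 k \<omega> - \<eta> k *\<^sub>R \<epsilon>2 k \<omega>)"
      and M'=borel] eq by blast
  qed
  have measM: "Wseq k \<in> borel_measurable M" if "\<kappa> \<le> k" for k
    using measurable_from_subalg[OF subalg[rule_format] meas[OF that]] .
  have intZ: "integrable M (\<lambda>\<omega>. (norm (Wseq k \<omega> - V))^2)" if "\<kappa> \<le> k" "\<forall>\<omega>\<in>space M. norm (Wseq k \<omega> - V) \<le> B" for k V B
  proof -
    interpret prob_space M by (rule prob)
    note [measurable] = measM[OF that(1)]
    show ?thesis
      by (rule integrable_const_bound[where B="B^2"]) (use that(2) in \<open>auto intro!: power_mono\<close>)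
  qed
  define T where "T = max 1 (max (\<eta>0 * \<mu>) (max ((\<eta>0 * (Lc + b0 * K)^2 / \<mu>)^2) ((c1 / (b0 * r))^4)))"
  obtain n :: nat where n: "T / \<delta> < real n" using reals_Archimedean2 by blast
  define k0 where "k0 = max \<kappa> n"
  have big: "T \<le> (u k)^4" if "k0 \<le> k" for k
  proof -
    have "T < \<delta> * real n" using n delta_pos by (simp add: field_simps)
    also have "\<delta> * real n \<le> \<delta> * real k" using that delta_pos by (intro mult_left_mono) (auto simp: k0_def)
    also have "\<dots> \<le> (u k)^4" by (simp add: u4)
    finally show ?thesis by simp
  qed
  have c_eta: "\<eta> k * \<mu> \<le> 1" if "k0 \<le> k" for k
  proof -
    have "\<eta>0 * \<mu> \<le> (u k)^4" using big[OF that] by (simp add: T_def)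
    then show ?thesis using u0[of k] by (simp add: eta_u field_simps)
  qed
  have c_eta0: "\<eta> k * \<mu> > 0" for k using eta0_pos mu_pos u0[of k] by (simp add: eta_u)
  have c_L: "\<eta> k * (Lc + \<beta> k * K)^2 \<le> \<mu>" if "k0 \<le> k" for k
  proof -
    define X where "X = \<eta>0 * (Lc + b0 * K)^2 / \<mu>"
    have X0: "X \<ge> 0" using eta0_pos mu_pos by (simp add: X_def)
    have "X^2 \<le> ((u k)^2)^2" using big[OF that] by (simp add: T_def X_def flip: power_mult)
    then have Xu: "X \<le> (u k)^2" by (rule power2_le_imp_le) simp
    have L0: "Lc \<ge> 0" using mu_pos mu_le_L by simp
    have "Lc + \<beta> k * K \<le> u k * (Lc + b0 * K)"
    proof -
      have "Lc \<le> u k * Lc" using u1[of k] L0 by (simp add: mult_right_mono mult_le_cancel_right1)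
      then show ?thesis by (simp add: beta_u algebra_simps)
    qed
    moreover have "0 \<le> Lc + \<beta> k * K" using L0 beta_pos[of k] Kpos by simp
    ultimately have "(Lc + \<beta> k * K)^2 \<le> (u k * (Lc + b0 * K))^2" by (rule power_mono)
    then have "\<eta> k * (Lc + \<beta> k * K)^2 \<le> \<eta> k * ((u k)^2 * (Lc + b0 * K)^2)"
      using eta0_pos u0[of k] by (intro mult_left_mono) (auto simp: eta_u power_mult_distrib)
    also have "\<dots> = \<eta>0 * (Lc + b0 * K)^2 / (u k)^2"
      using u0[of k] by (simp add: eta_u field_simps power2_eq_square power4_eq_xxxx)
    also have "\<dots> \<le> \<mu>"
    proof -
      have "\<eta>0 * (Lc + b0 * K)^2 \<le> \<mu> * (u k)^2" using Xu mu_pos by (simp add: X_def field_simps)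
      then show ?thesis using u0[of k] by (simp add: field_simps)
    qed
    finally show ?thesis .
  qed
  have c_Z: "Z k \<in> P" if "k0 \<le> k" for k
  proof -
    have h: "(c1 / (b0 * r))^4 \<le> (u k)^4" using big[OF that] by (simp add: T_def)
    have "c1 / (b0 * r) \<le> u k"
      using power_mono_iff[of "c1 / (b0 * r)" "u k" 4] h c1nn b0pos r0 u0[of k] by simp
    then have "c1 \<le> r * (b0 * u k)" using b0pos r0 by (simp add: field_simps)
    then have "c1 / \<beta> k \<le> r" using beta_pos[of k] by (simp add: beta_u field_simps)
    then have "norm (Z k - vec wstar) \<le> r" using Zb[of k] by linarith
    then show ?thesis unfolding P_def by (rule prodset_ball[OF rball])
  qed
  define e where "e k = (\<integral>\<omega>. (norm (Wseq k \<omega> - Z k))^2 \<partial>M)" for k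
  have e_nn: "e k \<ge> 0" for k unfolding e_def by (rule integral_nonneg_AE) simp
  have etap: "\<eta> k > 0" for k using eta0_pos u0[of k] by (simp add: eta_u)
  define Cst where "Cst = 2 * (N * (\<gamma>0^2 * \<Sigma>1 + \<eta>0^2 * \<Sigma>2)) + 3 * c2^2 / (\<eta>0 * \<mu>)"
  have recstep: "e (Suc k) \<le> (1 - (\<eta>0 * \<mu> / 2) / (u k)^4) * e k + Cst / (u k)^6" if k0k: "k0 \<le> k" for k
  proof -
    have kk: "\<kappa> \<le> k" using k0k by (simp add: k0_def)
    interpret prob_space M by (rule prob)
    define X where "X = Wseq k"
    define A where "A \<omega> = X \<omega> - \<eta> k *\<^sub>R gradG k (X \<omega>) - Z k" for \<omega>
    have XmF: "X \<in> borel_measurable (Fk k)" unfolding X_def by (rule meas[OF kk])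
    have GmF: "(\<lambda>\<omega>. gradG k (X \<omega>)) \<in> borel_measurable (Fk k)"
      by (rule borel_measurable_continuous_on[OF contG XmF])
    have AmF: "A \<in> borel_measurable (Fk k)" unfolding A_def using XmF GmF by measurable
    have ZP: "Z k \<in> P" by (rule c_Z[OF k0k])
    have Acon: "(norm (A \<omega>))^2 \<le> (1 - \<eta> k * \<mu>) * (norm (X \<omega> - Z k))^2" for \<omega>
    proof -
      have Aeq: "A \<omega> = (X \<omega> - \<eta> k *\<^sub>R (Ph (X \<omega>) + \<beta> k *\<^sub>R Lhat Lm (X \<omega>)))
          - (Z k - \<eta> k *\<^sub>R (Ph (Z k) + \<beta> k *\<^sub>R Lhat Lm (Z k)))"
        using Z[of k] by (simp add: A_def gG)
      have "(norm (A \<omega>))^2 \<le> (1 - 2 * \<eta> k * \<mu> + (\<eta> k)^2 * (Lc + \<beta> k * K)^2) * (norm (X \<omega> - Z k))^2"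
        unfolding Aeq by (rule D.contraction) (use beta_pos[of k] etap[of k] in \<open>auto simp: less_imp_le\<close>)
      also have "\<dots> \<le> (1 - \<eta> k * \<mu>) * (norm (X \<omega> - Z k))^2"
      proof (rule mult_right_mono)
        have "\<eta> k * (\<eta> k * (Lc + \<beta> k * K)^2) \<le> \<eta> k * \<mu>"
          using c_L[OF k0k] c_eta0[of k] mu_pos by (intro mult_left_mono) (auto simp: zero_less_mult_iff)
        then show "1 - 2 * \<eta> k * \<mu> + (\<eta> k)^2 * (Lc + \<beta> k * K)^2 \<le> 1 - \<eta> k * \<mu>"
          by (simp add: power2_eq_square algebra_simps)
      qed simp
      finally show ?thesis .
    qed
    have Ab: "\<forall>\<omega>\<in>space M. norm (A \<omega>) \<le> Bx"
    proof
      fix \<omega> assume \<omega>: "\<omega> \<in> space M"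
      have "(1 - \<eta> k * \<mu>) * (norm (X \<omega> - Z k))^2 \<le> 1 * (norm (X \<omega> - Z k))^2"
        by (rule mult_right_mono) (use c_eta0[of k] in auto)
      then have "(norm (A \<omega>))^2 \<le> (norm (X \<omega> - Z k))^2" using Acon[of \<omega>] by linarith
      then have "norm (A \<omega>) \<le> norm (X \<omega> - Z k)" by (simp add: power2_le_iff_abs_le)
      also have "\<dots> \<le> Bx" using PZ inP[OF kk \<omega>] by (simp add: X_def)
      finally show "norm (A \<omega>) \<le> Bx" .
    qed
    have e1M: "\<epsilon>1 k \<in> borel_measurable M"
      using measurable_from_subalg[OF subalg[rule_format] eps1_meas[rule_format, OF kk]] .
    have e2M: "\<epsilon>2 k \<in> borel_measurable M"
      using measurable_from_subalg[OF subalg[rule_format] eps2_meas[rule_format, OF kk]] .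
    have S1: "N * \<Sigma>1 \<ge> 0" and S2: "N * \<Sigma>2 \<ge> 0" using N0 Sigma1_nn Sigma2_nn by auto
    have m1: "\<forall>b\<in>Basis. AE \<omega> in M. real_cond_exp M (Fk k) (\<lambda>x. \<epsilon>1 k x \<bullet> b) \<omega> = 0"
      using eps1_mean kk by blast
    have m2: "\<forall>b\<in>Basis. AE \<omega> in M. real_cond_exp M (Fk k) (\<lambda>x. \<epsilon>2 k x \<bullet> b) \<omega> = 0"
      using eps2_mean kk by blast
    have m12: "AE \<omega> in M. real_cond_exp M (Fk k) (\<lambda>x. \<epsilon>1 k x \<bullet> \<epsilon>2 k x) \<omega> = 0"
      using eps_orth kk by blast
    note ns = noise_step[OF prob subalg[rule_format] AmF Ab e1M e2M m1 m2 m12 S1 S2,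
        of "\<gamma> k" "\<eta> k"]
    have v1: "AE \<omega> in M. nn_cond_exp M (Fk k) (\<lambda>x. ennreal ((norm (\<epsilon>1 k x))^2)) \<omega> \<le> ennreal (N * \<Sigma>1)"
      using eps1_var kk by (simp add: N_def)
    have v2: "AE \<omega> in M. nn_cond_exp M (Fk k) (\<lambda>x. ennreal ((norm (\<epsilon>2 k x))^2)) \<omega> \<le> ennreal (N * \<Sigma>2)"
      using eps2_var kk by (simp add: N_def)
    have I1: "integrable M (\<lambda>\<omega>. (norm (A \<omega> + \<gamma> k *\<^sub>R \<epsilon>1 k \<omega> - \<eta> k *\<^sub>R \<epsilon>2 k \<omega>))^2)"
      and I2: "(\<integral>\<omega>. (norm (A \<omega> + \<gamma> k *\<^sub>R \<epsilon>1 k \<omega> - \<eta> k *\<^sub>R \<epsilon>2 k \<omega>))^2 \<partial>M)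
            \<le> (\<integral>\<omega>. (norm (A \<omega>))^2 \<partial>M) + (\<gamma> k)^2 * (N * \<Sigma>1) + (\<eta> k)^2 * (N * \<Sigma>2)"
      using ns[OF v1 v2] by auto
    have pw1: "norm (Wseq (Suc k) \<omega> - Z k) \<le> norm (A \<omega> + \<gamma> k *\<^sub>R \<epsilon>1 k \<omega> - \<eta> k *\<^sub>R \<epsilon>2 k \<omega>)"
      if \<omega>: "\<omega> \<in> space M" for \<omega>
    proof -
      have "Wseq (Suc k) \<omega> = closest_point P ((A \<omega> + \<gamma> k *\<^sub>R \<epsilon>1 k \<omega> - \<eta> k *\<^sub>R \<epsilon>2 k \<omega>) + Z k)"
        using iter kk \<omega> by (simp add: P_def A_def X_def algebra_simps)
      moreover have "Z k = closest_point P (Z k)" using ZP by (simp add: closest_point_self)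
      ultimately have "norm (Wseq (Suc k) \<omega> - Z k) = dist (closest_point P ((A \<omega> + \<gamma> k *\<^sub>R \<epsilon>1 k \<omega> - \<eta> k *\<^sub>R \<epsilon>2 k \<omega>) + Z k)) (closest_point P (Z k))"
        by (simp add: dist_norm)
      also have "\<dots> \<le> dist ((A \<omega> + \<gamma> k *\<^sub>R \<epsilon>1 k \<omega> - \<eta> k *\<^sub>R \<epsilon>2 k \<omega>) + Z k) (Z k)"
        by (rule closest_point_lipschitz[OF Pcv Pcl Pne])
      finally show ?thesis by (simp add: dist_norm)
    qed
    have kk1: "\<kappa> \<le> Suc k" using kk by simp
    have bX1: "\<forall>\<omega>\<in>space M. norm (Wseq (Suc k) \<omega> - Z j) \<le> Bx" for j using PZ inP[OF kk1] by blast
    have bX: "\<forall>\<omega>\<in>space M. norm (Wseq k \<omega> - Z j) \<le> Bx" for j using PZ inP[OF kk] by blast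
    have iX1: "integrable M (\<lambda>\<omega>. (norm (Wseq (Suc k) \<omega> - Z j))^2)" for j by (rule intZ[OF kk1 bX1])
    have iX: "integrable M (\<lambda>\<omega>. (norm (Wseq k \<omega> - Z k))^2)" by (rule intZ[OF kk bX])
    have iA: "integrable M (\<lambda>\<omega>. (norm (A \<omega>))^2)"
    proof -
      have [measurable]: "A \<in> borel_measurable M" by (rule measurable_from_subalg[OF subalg[rule_format] AmF])
      show ?thesis by (rule integrable_const_bound[where B="Bx^2"]) (use Ab in \<open>auto intro!: power_mono\<close>)
    qed
    have E1: "(\<integral>\<omega>. (norm (Wseq (Suc k) \<omega> - Z k))^2 \<partial>M)
        \<le> (\<integral>\<omega>. (norm (A \<omega> + \<gamma> k *\<^sub>R \<epsilon>1 k \<omega> - \<eta> k *\<^sub>R \<epsilon>2 k \<omega>))^2 \<partial>M)"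
      by (rule integral_mono[OF iX1 I1]) (use pw1 in \<open>auto intro!: power_mono\<close>)
    have E2: "(\<integral>\<omega>. (norm (A \<omega>))^2 \<partial>M) \<le> (1 - \<eta> k * \<mu>) * e k"
    proof -
      have "(\<integral>\<omega>. (norm (A \<omega>))^2 \<partial>M) \<le> (\<integral>\<omega>. (1 - \<eta> k * \<mu>) * (norm (X \<omega> - Z k))^2 \<partial>M)"
        by (rule integral_mono[OF iA]) (use iX Acon in \<open>auto simp: X_def\<close>)
      also have "\<dots> = (1 - \<eta> k * \<mu>) * e k" by (simp add: e_def X_def)
      finally show ?thesis .
    qed
    define c where "c = \<eta> k * \<mu> / 2"
    have c0: "c > 0" using c_eta0[of k] by (simp add: c_def)
    have pw2: "(norm (Wseq (Suc k) \<omega> - Z (Suc k)))^2 \<le> (1 + c) * (norm (Wseq (Suc k) \<omega> - Z k))^2 + (1 + 1 / c) * (c2 / (u k)^5)^2" for \<omega>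
    proof -
      have "(norm (Wseq (Suc k) \<omega> - Z (Suc k)))^2 = (norm ((Wseq (Suc k) \<omega> - Z k) + (Z k - Z (Suc k))))^2"
        by (simp add: algebra_simps)
      also have "\<dots> \<le> (1 + c) * (norm (Wseq (Suc k) \<omega> - Z k))^2 + (1 + 1 / c) * (norm (Z k - Z (Suc k)))^2"
        by (rule young_sq[OF c0])
      also have "(norm (Z k - Z (Suc k)))^2 \<le> (c2 / (u k)^5)^2"
        using drift[of k] by (simp add: norm_minus_commute power_mono)
      then have "(1 + 1 / c) * (norm (Z k - Z (Suc k)))^2 \<le> (1 + 1 / c) * (c2 / (u k)^5)^2"
        using c0 by (intro mult_left_mono) auto
      finally show ?thesis by simp
    qed
    have E3: "e (Suc k) \<le> (1 + c) * (\<integral>\<omega>. (norm (Wseq (Suc k) \<omega> - Z k))^2 \<partial>M) + (1 + 1 / c) * (c2 / (u k)^5)^2"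
    proof -
      have "e (Suc k) \<le> (\<integral>\<omega>. (1 + c) * (norm (Wseq (Suc k) \<omega> - Z k))^2 + (1 + 1 / c) * (c2 / (u k)^5)^2 \<partial>M)"
        unfolding e_def by (rule integral_mono[OF iX1]) (use iX1 pw2 in auto)
      also have "\<dots> = (1 + c) * (\<integral>\<omega>. (norm (Wseq (Suc k) \<omega> - Z k))^2 \<partial>M) + (1 + 1 / c) * (c2 / (u k)^5)^2"
        using iX1 by (simp add: prob_space)
      finally show ?thesis .
    qed
    define G where "G = (\<gamma> k)^2 * (N * \<Sigma>1) + (\<eta> k)^2 * (N * \<Sigma>2)"
    define Dd where "Dd = (c2 / (u k)^5)^2"
    have G0: "G \<ge> 0" using S1 S2 by (simp add: G_def)
    have hE: "e (Suc k) \<le> (1 + (\<eta> k * \<mu>) / 2) * ((1 - \<eta> k * \<mu>) * e k + G) + (1 + 1 / ((\<eta> k * \<mu>) / 2)) * Dd"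
    proof -
      have "(\<integral>\<omega>. (norm (Wseq (Suc k) \<omega> - Z k))^2 \<partial>M) \<le> (1 - \<eta> k * \<mu>) * e k + G"
        using E1 I2 E2 by (simp add: G_def)
      then have "(1 + c) * (\<integral>\<omega>. (norm (Wseq (Suc k) \<omega> - Z k))^2 \<partial>M) \<le> (1 + c) * ((1 - \<eta> k * \<mu>) * e k + G)"
        using c0 by (intro mult_left_mono) auto
      then show ?thesis using E3 by (simp add: c_def Dd_def)
    qed
    have st: "e (Suc k) \<le> (1 - (\<eta> k * \<mu>) / 2) * e k + 2 * G + 3 * Dd / (\<eta> k * \<mu>)"
      by (rule num_step[OF c_eta0 c_eta[OF k0k] e_nn G0 _ hE]) (simp add: Dd_def)
    have x2: "(\<eta> k * \<mu>) / 2 = (\<eta>0 * \<mu> / 2) / (u k)^4" by (simp add: eta_u)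
    have gb: "2 * G + 3 * Dd / (\<eta> k * \<mu>) \<le> Cst / (u k)^6"
    proof -
      have u6: "(u k)^6 \<ge> 1" using u1[of k] by (simp add: one_le_power)
      have u8: "(u k)^8 = (u k)^6 * (u k)^2" by (simp flip: power_add)
      have u10: "(u k)^10 = (u k)^6 * (u k)^4" by (simp flip: power_add)
      have u2: "(u k)^2 \<ge> 1" using u1[of k] by (simp add: one_le_power)
      have g2: "(\<gamma> k)^2 = \<gamma>0^2 / (u k)^6" by (simp add: gam_u power_divide flip: power_mult)
      have e2: "(\<eta> k)^2 \<le> \<eta>0^2 / (u k)^6"
      proof -
        have "(\<eta> k)^2 = \<eta>0^2 / (u k)^8" by (simp add: eta_u power_divide flip: power_mult)
        also have "\<dots> \<le> \<eta>0^2 / (u k)^6"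
        proof -
          have u68: "(u k)^6 \<le> (u k)^8" by (rule power_increasing) (use u1[of k] in auto)
          show ?thesis using u0[of k] u68 by (intro divide_left_mono) auto
        qed
        finally show ?thesis .
      qed
      have "2 * G \<le> 2 * (N * (\<gamma>0^2 * \<Sigma>1 + \<eta>0^2 * \<Sigma>2)) / (u k)^6"
      proof -
        have "G \<le> \<gamma>0^2 / (u k)^6 * (N * \<Sigma>1) + \<eta>0^2 / (u k)^6 * (N * \<Sigma>2)"
          unfolding G_def g2 using e2 S2 by (intro add_left_mono mult_right_mono) auto
        then have "2 * G \<le> 2 * (\<gamma>0^2 / (u k)^6 * (N * \<Sigma>1) + \<eta>0^2 / (u k)^6 * (N * \<Sigma>2))" by simp
        also have "\<dots> = 2 * (N * (\<gamma>0^2 * \<Sigma>1 + \<eta>0^2 * \<Sigma>2)) / (u k)^6"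
          using u0[of k] by (simp add: field_simps)
        finally show ?thesis .
      qed
      moreover have "3 * Dd / (\<eta> k * \<mu>) = 3 * c2^2 / (\<eta>0 * \<mu>) / (u k)^6"
      proof -
        have gen: "\<And>v w. v > 0 \<Longrightarrow> w > 0 \<Longrightarrow> 3 * (c2^2 / (v * w)) / (\<eta>0 / w * \<mu>) = 3 * c2^2 / (\<eta>0 * \<mu>) / v"
          using eta0_pos mu_pos by (simp add: field_simps)
        have p: "((u k)^5)^2 = (u k)^6 * (u k)^4" by (simp add: power_add[symmetric] power_mult[symmetric])
        have d1: "Dd = c2^2 / ((u k)^6 * (u k)^4)"
          unfolding Dd_def power_divide p ..
        show ?thesis unfolding d1 eta_u using gen[of "(u k)^6" "(u k)^4"] u0[of k] by simp
      qed
      moreover have "Cst / (u k)^6 = 2 * (N * (\<gamma>0^2 * \<Sigma>1 + \<eta>0^2 * \<Sigma>2)) / (u k)^6 + 3 * c2^2 / (\<eta>0 * \<mu>) / (u k)^6"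
        unfolding Cst_def by (rule add_divide_distrib)
      ultimately show ?thesis by linarith
    qed
    show ?thesis using st x2 gb by (simp add: x2)
  qed
  have a58: "\<eta>0 * \<mu> / 2 \<ge> 5 / 8 * \<delta>" using delta_le by (simp add: mult_ac)
  have smallc: "\<forall>k\<ge>k0. (\<eta>0 * \<mu> / 2) / (u k)^4 \<le> 1"
  proof (intro allI impI)
    fix k assume "k0 \<le> k"
    then have "\<eta> k * \<mu> \<le> 1" by (rule c_eta)
    then show "(\<eta>0 * \<mu> / 2) / (u k)^4 \<le> 1" by (simp add: eta_u)
  qed
  have Cst0: "Cst \<ge> 0" using N0 Sigma1_nn Sigma2_nn eta0_pos mu_pos by (simp add: Cst_def)
  obtain Kr where Kr: "\<forall>k\<ge>k0. e k \<le> Kr / (u k)^2"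
    using rec_bound[of u \<delta> "\<eta>0 * \<mu> / 2" Cst k0 e] u1 ustep delta_pos a58 Cst0 smallc recstep by blast
  define m where "m = min 1 \<delta>"
  have m0: "m > 0" using delta_pos by (simp add: m_def)
  have usq: "sqrt m * sqrt (real k + 1) \<le> (u k)^2" for k
  proof -
    have "m * (real k + 1) \<le> 1 + \<delta> * real k"
    proof -
      have "m * real k \<le> \<delta> * real k" by (intro mult_right_mono) (auto simp: m_def)
      moreover have "m \<le> 1" by (simp add: m_def)
      ultimately show ?thesis by (simp add: algebra_simps)
    qed
    then have "sqrt (m * (real k + 1)) \<le> sqrt (1 + \<delta> * real k)" by (rule real_sqrt_le_mono)
    also have "sqrt (1 + \<delta> * real k) = (u k)^2"
      by (rule real_sqrt_unique) (simp_all add: u4 flip: power_mult)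
    finally show ?thesis by (simp add: real_sqrt_mult)
  qed
  define CA where "CA = (2 / N) * (max Kr 0 + (c1 / b0)^2) / sqrt m"
  define CB where "CB = R^2 * sqrt (real k0 + 1)"
  show ?thesis
  proof (intro exI[of _ "max CA CB"] allI impI)
    fix k assume kk: "\<kappa> \<le> k"
    interpret prob_space M by (rule prob)
    have integrand: "(\<lambda>\<omega>. (1 / real CARD('n)) * (\<Sum>i\<in>UNIV. (norm (Wseq k \<omega> $ i - wstar))\<^sup>2))
        = (\<lambda>\<omega>. (1 / N) * (norm (Wseq k \<omega> - vec wstar))^2)"
      by (simp add: N_def norm_vec_sq vec_def)
    have sk: "sqrt (real k + 1) > 0" by simp
    have bW: "\<forall>\<omega>\<in>space M. norm (Wseq k \<omega> - vec wstar) \<le> sqrt (N * R^2)" using PBn inP[OF kk] by blast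
    have intW: "integrable M (\<lambda>\<omega>. (norm (Wseq k \<omega> - vec wstar))^2)" by (rule intZ[OF kk bW])
    have goal: "(\<integral>\<omega>. (1 / N) * (norm (Wseq k \<omega> - vec wstar))^2 \<partial>M) \<le> max CA CB / sqrt (real k + 1)"
    proof (cases "k0 \<le> k")
      case True
      have bZ: "\<forall>\<omega>\<in>space M. norm (Wseq k \<omega> - Z k) \<le> Bx" using PZ inP[OF kk] by blast
      have iX: "integrable M (\<lambda>\<omega>. (norm (Wseq k \<omega> - Z k))^2)" by (rule intZ[OF kk bZ])
      have pw: "(1 / N) * (norm (Wseq k \<omega> - vec wstar))^2 \<le> (2 / N) * (norm (Wseq k \<omega> - Z k))^2 + (2 / N) * (c1 / \<beta> k)^2" for \<omega>
      proof -
        have "(norm (Wseq k \<omega> - vec wstar))^2 = (norm ((Wseq k \<omega> - Z k) + (Z k - vec wstar)))^2"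
          by (simp add: algebra_simps)
        also have "\<dots> \<le> (1 + 1) * (norm (Wseq k \<omega> - Z k))^2 + (1 + 1 / 1) * (norm (Z k - vec wstar))^2"
          by (rule young_sq) simp
        also have "(norm (Z k - vec wstar))^2 \<le> (c1 / \<beta> k)^2" using Zb[of k] by (simp add: power_mono)
        finally have "(norm (Wseq k \<omega> - vec wstar))^2 \<le> 2 * (norm (Wseq k \<omega> - Z k))^2 + 2 * (c1 / \<beta> k)^2" by simp
        then show ?thesis using N0 by (simp add: field_simps divide_right_mono)
      qed
      have "(\<integral>\<omega>. (1 / N) * (norm (Wseq k \<omega> - vec wstar))^2 \<partial>M)
          \<le> (\<integral>\<omega>. (2 / N) * (norm (Wseq k \<omega> - Z k))^2 + (2 / N) * (c1 / \<beta> k)^2 \<partial>M)"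
        by (rule integral_mono) (use intW iX pw in auto)
      also have "\<dots> = (2 / N) * e k + (2 / N) * (c1 / \<beta> k)^2"
        using iX by (simp add: e_def prob_space)
      also have "\<dots> \<le> (2 / N) * (Kr / (u k)^2) + (2 / N) * ((c1 / b0)^2 / (u k)^2)"
      proof -
        have "e k \<le> Kr / (u k)^2" using Kr True by blast
        moreover have "(c1 / \<beta> k)^2 = (c1 / b0)^2 / (u k)^2" by (simp add: beta_u power_divide power_mult_distrib)
        moreover have "(2 / N) * e k \<le> (2 / N) * (Kr / (u k)^2)"
          using calculation(1) N0 by (intro mult_left_mono) auto
        ultimately show ?thesis by simp
      qed
      also have "\<dots> \<le> (2 / N) * (max Kr 0 + (c1 / b0)^2) / (u k)^2"
      proof -
        have "Kr / (u k)^2 \<le> max Kr 0 / (u k)^2" using u0[of k] by (intro divide_right_mono) auto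
        then have "(2 / N) * (Kr / (u k)^2) + (2 / N) * ((c1 / b0)^2 / (u k)^2)
            \<le> (2 / N) * (max Kr 0 / (u k)^2) + (2 / N) * ((c1 / b0)^2 / (u k)^2)"
          using N0 by (intro add_right_mono mult_left_mono) auto
        also have "\<dots> = (2 / N) * (max Kr 0 + (c1 / b0)^2) / (u k)^2"
          by (simp add: add_divide_distrib distrib_left)
        finally show ?thesis .
      qed
      also have "\<dots> \<le> (2 / N) * (max Kr 0 + (c1 / b0)^2) / (sqrt m * sqrt (real k + 1))"
        using usq[of k] m0 N0 u0[of k] by (intro divide_left_mono) (auto intro!: mult_nonneg_nonneg add_nonneg_nonneg mult_pos_pos)
      also have "\<dots> = CA / sqrt (real k + 1)" by (simp add: CA_def)
      also have "\<dots> \<le> max CA CB / sqrt (real k + 1)" using sk by (intro divide_right_mono) auto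
      finally show ?thesis .
    next
      case False
      have "(\<integral>\<omega>. (1 / N) * (norm (Wseq k \<omega> - vec wstar))^2 \<partial>M) \<le> (\<integral>\<omega>. R^2 \<partial>M)"
      proof (rule integral_mono)
        show "integrable M (\<lambda>\<omega>. (1 / N) * (norm (Wseq k \<omega> - vec wstar))^2)" using intW by simp
        show "integrable M (\<lambda>\<omega>. R^2)" by simp
        fix \<omega> assume "\<omega> \<in> space M"
        then have "(norm (Wseq k \<omega> - vec wstar))^2 \<le> N * R^2" using PB inP[OF kk] by blast
        then show "(1 / N) * (norm (Wseq k \<omega> - vec wstar))^2 \<le> R^2" using N0 by (simp add: field_simps)
      qed
      also have "\<dots> = R^2" by (simp add: prob_space)
      also have "R^2 \<le> CB / sqrt (real k + 1)"
      proof -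
        have "sqrt (real k + 1) \<le> sqrt (real k0 + 1)" using False by simp
        then have "R^2 * sqrt (real k + 1) \<le> R^2 * sqrt (real k0 + 1)" by (intro mult_left_mono) auto
        then show ?thesis using sk by (simp add: CB_def field_simps)
      qed
      also have "\<dots> \<le> max CA CB / sqrt (real k + 1)" using sk by (intro divide_right_mono) auto
      finally show ?thesis .
    qed
    then show "(\<integral>\<omega>. (1 / real CARD('n)) * (\<Sum>i\<in>UNIV. (norm (Wseq k \<omega> $ i - wstar))\<^sup>2) \<partial>M)
        \<le> max CA CB / sqrt (real k + 1)" by (simp only: integrand)
  qed
qed

end
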